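(* Assume $z>w>x>y$, $w+x>z+y$, $w>0$, $z>0$, and that $G$ is connected. Fix an initial condition $\mathbf q(0)$ with all $q_i(0)\neq 0$, and let $N_C(0)=\{i:q_i(0)<0\}$ and $N_D(0)=\{i:q_i(0)>0\}$. Then: (1) For any network $G$ there exist behavioural parameters (time-invariant $\psi_i>0$, $\eta_i\in[0,1]$, and increasing functions $\lambda_i(t)>0$ with $\lambda_i(t)\to\infty$) such that all agents' actions converge to the risk-dominant action $D$. (2) If $N_D(0)$ contains no nonempty subset $S$ with cohesiveness $\min_{i\in S}|N_i\cap S|/d_i\ge\frac{2(z-x)}{z-x+w-y}$, then there exist behavioural parameters (of the same kind, possibly heterogeneous across agents) such that all agents' actions converge to the efficient action $C$.
   Context: There are $n$ agents on an undirected simple graph with symmetric adjacency matrix $G\in\{0,1\}^{n\times n}$, $G_{ii}=0$; $N_i=\{j:G_{ij}=1\}$, $d_i=|N_i|$. Actions are $C$ and $D$. The stage payoff to an agent playing the row action against a neighbour playing the column action is $u(C,C)=z$, $u(C,D)=y$, $u(D,C)=x$, $u(D,D)=w$. The state is $\mathbf q(t)\in\mathbb R^n$, $p_i(t)=1/(1+e^{-\lambda_i(t) q_i(t)})$ is the frequency with which $i$ plays $D$, and the dynamics are $$\dot q_i=-\psi_i q_i+\big(p_i+\eta_i(1-p_i)\big)\sum_{j\in N_i}\big(p_jw+(1-p_j)x\big)-\big(1-p_i+\eta_ip_i\big)\sum_{j\in N_i}\big(p_jy+(1-p_j)z\big).$$ "Actions converge to $D$" means $p_i(t)\to 1$ for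 all $i$; "converge to $C$" means $p_i(t)\to 0$ for all $i$. *)

theory Defs
  imports "HOL-Analysis.Analysis"
begin

definition simple_graph :: "nat \<Rightarrow> (nat \<Rightarrow> nat \<Rightarrow> bool) \<Rightarrow> bool" where
  "simple_graph n G \<longleftrightarrow> (\<forall>i<n. \<forall>j<n. G i j \<longleftrightarrow> G j i) \<and> (\<forall>i<n. \<not> G i i)"

definition nbrs :: "nat \<Rightarrow> (nat \<Rightarrow> nat \<Rightarrow> bool) \<Rightarrow> nat \<Rightarrow> nat set" where
  "nbrs n G i = {j. j < n \<and> G i j}"

definition deg :: "nat \<Rightarrow> (nat \<Rightarrow> nat \<Rightarrow> bool) \<Rightarrow> nat \<Rightarrow> nat" where
  "deg n G i = card (nbrs n G i)"

definition connected_graph :: "nat \<Rightarrow> (nat \<Rightarrow> nat \<Rightarrow> bool) \<Rightarrow> bool" where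
  "connected_graph n G \<longleftrightarrow>
     (\<forall>i<n. \<forall>j<n. (\<lambda>a b. a < n \<and> b < n \<and> G a b)\<^sup>*\<^sup>* i j)"

definition cohesiveness :: "nat \<Rightarrow> (nat \<Rightarrow> nat \<Rightarrow> bool) \<Rightarrow> nat set \<Rightarrow> real" where
  "cohesiveness n G S = Min ((\<lambda>i. real (card (nbrs n G i \<inter> S)) / real (deg n G i)) ` S)"

definition pD :: "real \<Rightarrow> real \<Rightarrow> real" where
  "pD lam q = 1 / (1 + exp (- lam * q))"

text \<open>Right-hand side of the dynamics for agent i at time t and state q.
  Payoffs: u(C,C)=z, u(C,D)=y, u(D,C)=x, u(D,D)=w.\<close>
definition field ::
  "nat \<Rightarrow> (nat \<Rightarrow> nat \<Rightarrow> bool) \<Rightarrow> real \<Rightarrow> real \<Rightarrow> real \<Rightarrow> real \<Rightarrow>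
   (nat \<Rightarrow> real) \<Rightarrow> (nat \<Rightarrow> real) \<Rightarrow> (nat \<Rightarrow> real \<Rightarrow> real) \<Rightarrow>
   real \<Rightarrow> (nat \<Rightarrow> real) \<Rightarrow> nat \<Rightarrow> real" where
  "field n G x y z w psi eta lam t q i =
     (let p = (\<lambda>j. pD (lam j t) (q j)) in
       - psi i * q i
       + (p i + eta i * (1 - p i)) * (\<Sum>j\<in>nbrs n G i. p j * w + (1 - p j) * x)
       - (1 - p i + eta i * p i) * (\<Sum>j\<in>nbrs n G i. p j * y + (1 - p j) * z))"

definition is_solution ::
  "nat \<Rightarrow> (nat \<Rightarrow> nat \<Rightarrow> bool) \<Rightarrow> real \<Rightarrow> real \<Rightarrow> real \<Rightarrow> real \<Rightarrow>
   (nat \<Rightarrow> real) \<Rightarrow> (nat \<Rightarrow> real) \<Rightarrow> (nat \<Rightarrow> real \<Rightarrow> real) \<Rightarrow>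
   (nat \<Rightarrow> real) \<Rightarrow> (real \<Rightarrow> nat \<Rightarrow> real) \<Rightarrow> bool" where
  "is_solution n G x y z w psi eta lam q0 q \<longleftrightarrow>
     (\<forall>i<n. q 0 i = q0 i) \<and>
     (\<forall>t\<ge>0. \<forall>i<n. ((\<lambda>s. q s i) has_real_derivative field n G x y z w psi eta lam t (q t) i)
                     (at t within {0..}))"

definition behavioural_params ::
  "nat \<Rightarrow> (nat \<Rightarrow> real) \<Rightarrow> (nat \<Rightarrow> real) \<Rightarrow> (nat \<Rightarrow> real \<Rightarrow> real) \<Rightarrow> bool" where
  "behavioural_params n psi eta lam \<longleftrightarrow>
     (\<forall>i<n. psi i > 0 \<and> 0 \<le> eta i \<and> eta i \<le> 1 \<and>
            (\<forall>t\<ge>0. lam i t > 0) \<and> strict_mono_on {0..} (lam i) \<and>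
            filterlim (lam i) at_top at_top)"

text \<open>Actions converge to D (target 1) or to C (target 0): there is a solution,
  and along every solution p_i(t) tends to the target for all agents.\<close>
definition actions_converge ::
  "nat \<Rightarrow> (nat \<Rightarrow> nat \<Rightarrow> bool) \<Rightarrow> real \<Rightarrow> real \<Rightarrow> real \<Rightarrow> real \<Rightarrow>
   (nat \<Rightarrow> real) \<Rightarrow> (nat \<Rightarrow> real) \<Rightarrow> (nat \<Rightarrow> real \<Rightarrow> real) \<Rightarrow>
   (nat \<Rightarrow> real) \<Rightarrow> real \<Rightarrow> bool" where
  "actions_converge n G x y z w psi eta lam q0 target \<longleftrightarrow>
     (\<exists>q. is_solution n G x y z w psi eta lam q0 q) \<and>
     (\<forall>q. is_solution n G x y z w psi eta lam q0 q \<longrightarrow>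
        (\<forall>i<n. ((\<lambda>t. pD (lam i t) (q t i)) \<longlongrightarrow> target) at_top))"

end

theory Submission
  imports Defs
begin


lemma within_local: "0 \<le> t \<Longrightarrow> t < T \<Longrightarrow> at t within {0..T} = at t within {0::real..}"
  by (rule at_within_nhd[where S="{..<T}"]) auto

lemma cont_on_local:
  assumes "\<And>T. T \<ge> 0 \<Longrightarrow> continuous_on {0..T} f"
  shows "continuous_on {0::real..} f"
  unfolding continuous_on_eq_continuous_within
proof
  fix t :: real assume "t \<in> {0..}"
  hence t: "0 \<le> t" by simp
  have "continuous (at t within {0..t+1}) f"
    using assms[of "t+1"] t by (simp add: continuous_on_eq_continuous_within)
  thus "continuous (at t within {0..}) f" using within_local[of t "t+1"] t by simp
qed

lemma integral_deriv0:
  assumes "continuous_on {0::real..} g" "t \<ge> 0"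
  shows "((\<lambda>u. integral {0..u} g) has_real_derivative g t) (at t within {0..})"
proof -
  have "continuous_on {0..t+1} g" using assms(1) by (rule continuous_on_subset) auto
  from integral_has_real_derivative[OF this, of t] assms(2)
  have "((\<lambda>u. integral {0..u} g) has_real_derivative g t) (at t within {0..t+1})" by simp
  thus ?thesis using within_local[of t "t+1"] assms(2) by simp
qed

lemma integral_cont0:
  fixes g :: "real \<Rightarrow> real"
  assumes "continuous_on {0::real..} g"
  shows "continuous_on {0..} (\<lambda>u. integral {0..u} g)"
  unfolding continuous_on_eq_continuous_within
  using integral_deriv0[OF assms] DERIV_continuous by blast

lemma integral_poly:
  assumes "0 \<le> t"
  shows "integral {0..t} (\<lambda>s. c * s ^ k) = c * t ^ Suc k / Suc k"
proof -
  have "((\<lambda>s. c * s ^ k) has_integral (c * t ^ Suc k / Suc k - c * 0 ^ Suc k / Suc k)) {0..t}"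
    apply (rule fundamental_theorem_of_calculus)
    using assms apply simp
    unfolding has_real_derivative_iff_has_vector_derivative[symmetric]
    by (rule derivative_eq_intros refl | simp)+
  thus ?thesis by (metis (no_types) integral_unique diff_zero mult_zero_right power_0_Suc div_0)
qed

lemma picard_exists:
  fixes F :: "real \<Rightarrow> (nat \<Rightarrow> real) \<Rightarrow> nat \<Rightarrow> real" and n :: nat and v0 :: "nat \<Rightarrow> real"
  assumes cont: "\<And>u i. i<n \<Longrightarrow> (\<And>j. j<n \<Longrightarrow> continuous_on {0..} (\<lambda>t. u t j))
                   \<Longrightarrow> continuous_on {0..} (\<lambda>t. F t (u t) i)"
    and lip: "\<And>T. T \<ge> 0 \<Longrightarrow> \<exists>L\<ge>0. \<forall>t\<in>{0..T}. \<forall>u v. \<forall>i<n.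
                  \<bar>F t u i - F t v i\<bar> \<le> L * (\<Sum>j<n. \<bar>u j - v j\<bar>)"
    and bnd: "\<exists>C. \<forall>t\<ge>0. \<forall>i<n. \<bar>F t v0 i\<bar> \<le> C"
  shows "\<exists>q. (\<forall>i<n. q 0 i = v0 i) \<and>
             (\<forall>t\<ge>0. \<forall>i<n. ((\<lambda>s. q s i) has_real_derivative F t (q t) i) (at t within {0..}))"
proof -
  define Q where "Q = rec_nat (\<lambda>(t::real) (i::nat). v0 i)
                    (\<lambda>k Qk t i. v0 i + integral {0..t} (\<lambda>s. F s (Qk s) i))"
  have Q0: "\<And>t i. Q 0 t i = v0 i" by (simp add: Q_def)
  have Q0f: "\<And>t. Q 0 t = v0" by (simp add: Q_def)
  have QS: "\<And>k t i. Q (Suc k) t i = v0 i + integral {0..t} (\<lambda>s. F s (Q k s) i)"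
    by (simp add: Q_def)
  have Qc: "continuous_on {0..} (\<lambda>t. Q k t i)" if "i < n" for k i
    using that
  proof (induction k arbitrary: i)
    case 0 then show ?case by (simp add: Q0)
  next
    case (Suc k)
    have "continuous_on {0..} (\<lambda>t. F t (Q k t) i)" using cont[of i "Q k"] Suc.IH Suc.prems by blast
    then show ?case unfolding QS by (intro continuous_intros integral_cont0)
  qed
  have Fc: "continuous_on {0..} (\<lambda>s. F s (Q k s) i)" if "i < n" for k i
    using cont[of i "Q k"] Qc that by blast
  have Fint: "(\<lambda>s. F s (Q k s) i) integrable_on {0..t}" if "i < n" for k i t
    by (rule integrable_continuous_real, rule continuous_on_subset[OF Fc[OF that]]) auto
  obtain C where C: "\<forall>t\<ge>0. \<forall>i<n. \<bar>F t v0 i\<bar> \<le> C" using bnd by blast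
  define C' where "C' = max C 0"
  have C': "\<And>t i. t \<ge> 0 \<Longrightarrow> i < n \<Longrightarrow> \<bar>F t v0 i\<bar> \<le> C'" "C' \<ge> 0"
    using C by (auto simp: C'_def intro: le_max_iff_disj[THEN iffD2])
  define q where "q t i = v0 i + (\<Sum>m. Q (Suc m) t i - Q m t i)" for t i
  have UL: "uniform_limit {0..T} (\<lambda>k t. Q k t i) (\<lambda>t. q t i) sequentially"
    if T: "T \<ge> 0" and i: "i < n" for T i
  proof -
    obtain L where L: "L \<ge> 0" "\<forall>t\<in>{0..T}. \<forall>u v. \<forall>i<n. \<bar>F t u i - F t v i\<bar> \<le> L * (\<Sum>j<n. \<bar>u j - v j\<bar>)"
      using lip[OF T] by blast
    define a where "a = real n * L"
    define C0 where "C0 = real n * C' * T"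
    define D where "D k t = (\<Sum>j<n. \<bar>Q (Suc k) t j - Q k t j\<bar>)" for k t
    have a0: "a \<ge> 0" "C0 \<ge> 0" using L C' T by (auto simp: a_def C0_def)
    have Dc: "continuous_on {0..} (D k)" for k
      unfolding D_def by (intro continuous_intros Qc) auto
    have Dint: "(\<lambda>s. L * D k s) integrable_on {0..t}" for k t
      by (rule integrable_continuous_real, intro continuous_intros,
          rule continuous_on_subset[OF Dc]) auto
    have bound: "\<forall>t\<in>{0..T}. D k t \<le> C0 * (a*t)^k / fact k" for k
    proof (induction k)
      case 0
      show ?case
      proof
        fix t assume t: "t \<in> {0..T}"
        have "\<bar>Q (Suc 0) t j - Q 0 t j\<bar> \<le> C' * T" if j: "j < n" for j
        proof -
          have "Q (Suc 0) t j - Q 0 t j = integral {0..t} (\<lambda>s. F s v0 j)"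
            by (simp add: QS Q0 Q0f)
          also have "\<bar>\<dots>\<bar> \<le> integral {0..t} (\<lambda>s. C')"
            using integral_norm_bound_integral[of "\<lambda>s. F s v0 j" "{0..t}" "\<lambda>s. C'"]
              Fint[OF j, of 0 t] C'(1)[OF _ j] t by (auto simp: Q0f)
          also have "\<dots> = C' * t" using t by simp
          also have "\<dots> \<le> C' * T" using t C' by (auto intro: mult_left_mono)
          finally show ?thesis .
        qed
        hence "D 0 t \<le> (\<Sum>j<n. C' * T)" unfolding D_def by (intro sum_mono) auto
        thus "D 0 t \<le> C0 * (a * t) ^ 0 / fact 0" by (simp add: C0_def)
      qed
    next
      case (Suc k)
      show ?case
      proof
        fix t assume t: "t \<in> {0..T}"
        have "\<bar>Q (Suc (Suc k)) t j - Q (Suc k) t j\<bar> \<le> integral {0..t} (\<lambda>s. L * D k s)"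
          if j: "j < n" for j
        proof -
          have "Q (Suc (Suc k)) t j - Q (Suc k) t j
                 = integral {0..t} (\<lambda>s. F s (Q (Suc k) s) j - F s (Q k s) j)"
            by (simp add: QS[of "Suc k"] QS[of k] integral_diff Fint[OF j])
          also have "\<bar>\<dots>\<bar> \<le> integral {0..t} (\<lambda>s. L * D k s)"
          proof -
            have "\<bar>F s (Q (Suc k) s) j - F s (Q k s) j\<bar> \<le> L * D k s" if s: "s \<in> {0..t}" for s
              using L(2) s t j unfolding D_def by auto
            moreover have "(\<lambda>s. F s (Q (Suc k) s) j - F s (Q k s) j) integrable_on {0..t}"
              by (intro integrable_diff Fint[OF j])
            ultimately show ?thesis
              using integral_norm_bound_integral[of "\<lambda>s. F s (Q (Suc k) s) j - F s (Q k s) j"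
                     "{0..t}" "\<lambda>s. L * D k s"] Dint[of k t]
              unfolding real_norm_def by blast
          qed
          finally show ?thesis .
        qed
        hence "D (Suc k) t \<le> (\<Sum>j<n. integral {0..t} (\<lambda>s. L * D k s))"
          unfolding D_def by (intro sum_mono) auto
        also have "\<dots> = real n * integral {0..t} (\<lambda>s. L * D k s)" by simp
        also have "integral {0..t} (\<lambda>s. L * D k s)
                   \<le> integral {0..t} (\<lambda>s. (L * C0 * a ^ k / fact k) * s ^ k)"
        proof (rule integral_le[OF Dint])
          show "(\<lambda>s. (L * C0 * a ^ k / fact k) * s ^ k) integrable_on {0..t}"
            by (rule integrable_continuous_real) (intro continuous_intros)
          fix s assume s: "s \<in> {0..t}"
          hence "D k s \<le> C0 * (a * s)^k / fact k" using Suc.IH t by auto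
          hence "L * D k s \<le> L * (C0 * (a * s)^k / fact k)" using L(1) by (rule mult_left_mono)
          thus "L * D k s \<le> (L * C0 * a ^ k / fact k) * s ^ k"
            by (simp add: power_mult_distrib)
        qed
        also have "\<dots> = (L * C0 * a ^ k / fact k) * t ^ Suc k / Suc k"
          by (rule integral_poly) (use t in auto)
        finally have "D (Suc k) t \<le> real n * ((L * C0 * a ^ k / fact k) * t ^ Suc k / Suc k)"
          by (simp add: mult_left_mono)
        also have "\<dots> = C0 * (a * t) ^ Suc k / fact (Suc k)"
          by (simp add: a_def power_mult_distrib field_simps)
        finally show "D (Suc k) t \<le> C0 * (a * t) ^ Suc k / fact (Suc k)" .
      qed
    qed
    define M where "M m = C0 * (a*T)^m / fact m" for m
    have sM: "summable M"
    proof -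
      have "summable (\<lambda>m. C0 * (inverse (fact m) * (a*T)^m))"
        by (intro summable_mult summable_exp)
      thus ?thesis unfolding M_def by (simp add: field_simps)
    qed
    have termb: "norm (Q (Suc m) t i - Q m t i) \<le> M m" if t: "t \<in> {0..T}" for m t
    proof -
      have "norm (Q (Suc m) t i - Q m t i) \<le> D m t"
        unfolding D_def real_norm_def by (rule member_le_sum[of i]) (use i in auto)
      also have "\<dots> \<le> C0 * (a*t)^m / fact m" using bound t by auto
      also have "\<dots> \<le> M m" unfolding M_def
        using t a0 by (intro divide_right_mono mult_left_mono power_mono mult_left_mono) auto
      finally show ?thesis .
    qed
    have "uniform_limit {0..T} (\<lambda>k t. \<Sum>m<k. Q (Suc m) t i - Q m t i)
            (\<lambda>t. \<Sum>m. Q (Suc m) t i - Q m t i) sequentially"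
      by (rule Weierstrass_m_test[OF termb sM])
    moreover have tel: "(\<Sum>m<k. Q (Suc m) t i - Q m t i) = Q k t i - v0 i" for k t
      using sum_lessThan_telescope[of "\<lambda>m. Q m t i" k] by (simp add: Q0)
    ultimately show ?thesis
      unfolding uniform_limit_iff q_def
      by (simp add: tel dist_real_def algebra_simps)
  qed
  have qc: "continuous_on {0..} (\<lambda>t. q t i)" if i: "i < n" for i
  proof (rule cont_on_local)
    fix T :: real assume T: "T \<ge> 0"
    show "continuous_on {0..T} (\<lambda>t. q t i)"
    proof (rule uniform_limit_theorem[OF _ UL[OF T i]])
      show "\<forall>\<^sub>F k in sequentially. continuous_on {0..T} (\<lambda>t. Q k t i)"
        using Qc[OF i] by (intro always_eventually allI, rule continuous_on_subset) auto
    qed simp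
  qed
  have Gc: "continuous_on {0..} (\<lambda>s. F s (q s) i)" if "i < n" for i
    using cont[of i q] qc that by blast
  have eqn: "q t i = v0 i + integral {0..t} (\<lambda>s. F s (q s) i)" if t: "t \<ge> 0" and i: "i < n" for t i
  proof -
    have ULF: "uniform_limit {0..t} (\<lambda>k s. F s (Q k s) i) (\<lambda>s. F s (q s) i) sequentially"
      unfolding uniform_limit_iff
    proof (intro allI impI)
      fix e :: real assume e: "e > 0"
      obtain L where L: "L \<ge> 0" "\<forall>s\<in>{0..t}. \<forall>u v. \<forall>i<n. \<bar>F s u i - F s v i\<bar> \<le> L * (\<Sum>j<n. \<bar>u j - v j\<bar>)"
        using lip[OF t] by blast
      define e' where "e' = e / (L * n + 1)"
      have pos: "L * n + 1 > 0" using L by (simp add: add_nonneg_pos)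
      have e': "e' > 0" using e pos by (simp add: e'_def)
      have "\<forall>j\<in>{..<n}. \<forall>\<^sub>F k in sequentially. \<forall>s\<in>{0..t}. dist (Q k s j) (q s j) < e'"
        using UL[OF t] e' unfolding uniform_limit_iff by blast
      hence "\<forall>\<^sub>F k in sequentially. \<forall>j\<in>{..<n}. \<forall>s\<in>{0..t}. dist (Q k s j) (q s j) < e'"
        by (simp add: eventually_ball_finite)
      thus "\<forall>\<^sub>F k in sequentially. \<forall>s\<in>{0..t}. dist (F s (Q k s) i) (F s (q s) i) < e"
      proof eventually_elim
        case (elim k)
        show ?case
        proof
          fix s assume s: "s \<in> {0..t}"
          have "\<bar>F s (Q k s) i - F s (q s) i\<bar> \<le> L * (\<Sum>j<n. \<bar>Q k s j - q s j\<bar>)"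
            using L(2) s i by blast
          also have "\<dots> \<le> L * (\<Sum>j<n. e')"
            using elim s L(1) by (intro mult_left_mono sum_mono) (auto simp: dist_real_def less_imp_le)
          also have "\<dots> = (L * n) * e'" by simp
          also have "\<dots> < e" unfolding e'_def using e pos by (simp add: field_simps)
          finally show "dist (F s (Q k s) i) (F s (q s) i) < e" by (simp add: dist_real_def)
        qed
      qed
    qed
    have FQc: "continuous_on {0..t} (\<lambda>s. F s (Q k s) i)" for k
      using Fc[OF i] by (rule continuous_on_subset) auto
    obtain I J where IJ: "\<And>k. ((\<lambda>s. F s (Q k s) i) has_integral I k) {0..t}"
      "((\<lambda>s. F s (q s) i) has_integral J) {0..t}" "I \<longlonglongrightarrow> J"
      using uniform_limit_integral[OF ULF FQc] by auto
    have "(\<lambda>k. Q (Suc k) t i) \<longlonglongrightarrow> v0 i + J"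
    proof -
      have "integral {0..t} (\<lambda>s. F s (Q k s) i) = I k" for k using IJ(1) by (rule integral_unique)
      thus ?thesis unfolding QS using IJ(3) by (simp add: tendsto_add)
    qed
    moreover have "(\<lambda>k. Q (Suc k) t i) \<longlonglongrightarrow> q t i"
      using tendsto_uniform_limitI[OF UL[OF t i], of t] t
      by (simp add: LIMSEQ_Suc[of "\<lambda>k. Q k t i"])
    ultimately have "q t i = v0 i + J" by (rule LIMSEQ_unique[rotated])
    thus ?thesis using IJ(2) by (simp add: integral_unique)
  qed
  show ?thesis
  proof (intro exI conjI allI impI)
    fix i assume "i < n" thus "q 0 i = v0 i" using eqn[of 0 i] by simp
  next
    fix t :: real and i assume t: "t \<ge> 0" and i: "i < n"
    have "((\<lambda>s. v0 i + integral {0..s} (\<lambda>s. F s (q s) i)) has_real_derivative 0 + F t (q t) i)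
           (at t within {0..})"
      by (rule DERIV_add[OF DERIV_const integral_deriv0[OF Gc[OF i] t]])
    hence "((\<lambda>s. v0 i + integral {0..s} (\<lambda>s. F s (q s) i)) has_real_derivative F t (q t) i)
           (at t within {0..})" by simp
    then show "((\<lambda>s. q s i) has_real_derivative F t (q t) i) (at t within {0..})"
      by (rule has_field_derivative_transform_within[where d=1])
         (use eqn t i in auto)
  qed
qed



lemma one_exp_pos: "0 < 1 + exp (v::real)" by (simp add: add_pos_pos)
lemma one_exp_ne: "1 + exp (v::real) \<noteq> 0" using one_exp_pos[of v] by linarith

lemma pD_alt: "pD l q = 1 / (1 + exp (- (l * q)))" by (simp add: pD_def)

lemma pD_bounds: "0 < pD l q" "pD l q < 1" "0 \<le> pD l q" "pD l q \<le> 1"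
  by (auto simp: pD_def add_pos_pos)

lemma pD_le_half: "0 \<le> l \<Longrightarrow> q \<le> 0 \<Longrightarrow> pD l q \<le> 1/2"
proof -
  assume "0 \<le> l" "q \<le> 0"
  hence "l * q \<le> 0" by (simp add: mult_nonneg_nonpos)
  hence "1 \<le> exp (- (l * q))" by simp
  thus ?thesis by (simp add: pD_alt divide_le_eq one_exp_pos)
qed

lemma pD_ge_half: "0 \<le> l \<Longrightarrow> 0 \<le> q \<Longrightarrow> 1/2 \<le> pD l q"
proof -
  assume "0 \<le> l" "0 \<le> q"
  hence "0 \<le> l * q" by simp
  hence "exp (- (l * q)) \<le> 1" by simp
  thus ?thesis by (simp add: pD_alt le_divide_eq one_exp_pos)
qed

lemma pD_le_exp: "pD l q \<le> exp (l * q)"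
proof -
  have "exp (l*q) * (1 + exp (- (l * q))) = exp (l*q) + 1" by (simp add: distrib_left exp_minus)
  hence "1 \<le> exp (l*q) * (1 + exp (- (l * q)))" by simp
  thus ?thesis by (simp add: pD_alt field_simps add_pos_pos)
qed

lemma pD_ge_exp: "1 - exp (- (l * q)) \<le> pD l q"
proof -
  have "1 - pD l q = exp (- (l * q)) / (1 + exp (- (l * q)))"
    using one_exp_ne[of "- (l * q)"] by (simp add: pD_alt field_simps)
  also have "\<dots> \<le> exp (- (l * q))" by (simp add: divide_le_eq add_pos_pos)
  finally show ?thesis by simp
qed

lemma sig_lip: fixes u v :: real shows "\<bar>1 / (1 + exp (- u)) - 1 / (1 + exp (- v))\<bar> \<le> \<bar>u - v\<bar>"
proof -
  have d: "((\<lambda>u::real. 1 / (1 + exp (- u))) has_field_derivative exp (- u) / (1 + exp (- u))^2) (at u within UNIV)" for u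
    by (rule derivative_eq_intros refl | simp add: one_exp_ne power2_eq_square)+
  have b: "norm (exp (- u) / (1 + exp (- u))^2) \<le> 1" for u :: real
  proof -
    have "exp (-u) \<le> (1 + exp (- u))^2" by (simp add: power2_eq_square algebra_simps add_pos_pos)
    thus ?thesis by (simp add: divide_le_eq add_pos_pos)
  qed
  from field_differentiable_bound[OF convex_UNIV d b, of u v] show ?thesis by simp
qed

lemma pD_lip: "0 \<le> l \<Longrightarrow> \<bar>pD l a - pD l b\<bar> \<le> l * \<bar>a - b\<bar>"
  using sig_lip[of "l*a" "l*b"] by (simp add: pD_alt abs_mult right_diff_distrib[symmetric])

lemma pD_half: "\<bar>pD l q - 1/2\<bar> \<le> \<bar>l * q\<bar>"
  using sig_lip[of "l*q" 0] by (simp add: pD_alt)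

lemma pD_cont: "continuous_on S l \<Longrightarrow> continuous_on S u \<Longrightarrow> continuous_on S (\<lambda>t. pD (l t) (u t))"
  unfolding pD_alt by (intro continuous_intros) (auto simp: one_exp_ne)

lemma cmp_up:
  fixes u u' :: "real \<Rightarrow> real"
  assumes ab: "a \<le> b" and psi: "\<psi> > 0"
    and der: "\<And>t. a < t \<Longrightarrow> t < b \<Longrightarrow> (u has_real_derivative u' t) (at t)"
    and cont: "continuous_on {a..b} u"
    and le: "\<And>t. a < t \<Longrightarrow> t < b \<Longrightarrow> u' t \<le> - \<psi> * u t + m"
  shows "u b \<le> m/\<psi> + (u a - m/\<psi>) * exp (- \<psi> * (b - a))"
proof -
  define g where "g t = - (exp (\<psi>*t) * (u t - m/\<psi>))" for t
  have "g a \<le> g b"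
  proof (rule DERIV_nonneg_imp_increasing_open[OF ab])
    fix t assume t: "a < t" "t < b"
    have "(g has_real_derivative - (exp (\<psi>*t) * \<psi> * (u t - m/\<psi>) + exp (\<psi>*t) * u' t)) (at t)"
      unfolding g_def by (rule derivative_eq_intros der[OF t] refl | simp)+
    moreover have "0 \<le> - (exp (\<psi>*t) * \<psi> * (u t - m/\<psi>) + exp (\<psi>*t) * u' t)"
    proof -
      have "exp (\<psi>*t) * \<psi> * (u t - m/\<psi>) + exp (\<psi>*t) * u' t = exp (\<psi>*t) * (\<psi> * u t - m + u' t)"
        using psi by (simp add: field_simps)
      also have "\<dots> \<le> 0" using le[OF t] by (intro mult_nonneg_nonpos) auto
      finally show ?thesis by simp
    qed
    ultimately show "\<exists>y. (g has_real_derivative y) (at t) \<and> 0 \<le> y" by blast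
  next
    show "continuous_on {a..b} g" unfolding g_def by (intro continuous_intros cont)
  qed
  hence "exp (\<psi>*b) * (u b - m/\<psi>) \<le> exp (\<psi>*a) * (u a - m/\<psi>)" by (simp add: g_def)
  hence "u b - m/\<psi> \<le> exp (\<psi>*a) * (u a - m/\<psi>) / exp (\<psi>*b)"
    by (simp add: le_divide_eq mult.commute)
  also have "\<dots> = (u a - m/\<psi>) * (exp (\<psi>*a) / exp (\<psi>*b))" by simp
  also have "exp (\<psi>*a) / exp (\<psi>*b) = exp (- \<psi> * (b - a))"
    by (simp add: exp_diff[symmetric] algebra_simps)
  finally show ?thesis by simp
qed

lemma cmp_lo:
  fixes u u' :: "real \<Rightarrow> real"
  assumes ab: "a \<le> b" and psi: "\<psi> > 0"
    and der: "\<And>t. a < t \<Longrightarrow> t < b \<Longrightarrow> (u has_real_derivative u' t) (at t)"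
    and cont: "continuous_on {a..b} u"
    and le: "\<And>t. a < t \<Longrightarrow> t < b \<Longrightarrow> - \<psi> * u t + m \<le> u' t"
  shows "m/\<psi> + (u a - m/\<psi>) * exp (- \<psi> * (b - a)) \<le> u b"
proof -
  have "(- u b) \<le> (-m)/\<psi> + ((- u a) - (-m)/\<psi>) * exp (- \<psi> * (b - a))"
    by (rule cmp_up[OF ab psi, of "\<lambda>t. - u t" "\<lambda>t. - u' t"])
       (use der le cont in \<open>force intro: derivative_intros continuous_intros\<close>)+
  thus ?thesis by (simp add: algebra_simps)
qed

lemma trap:
  fixes u u' :: "real \<Rightarrow> nat \<Rightarrow> real" and T :: real and c c' :: "nat \<Rightarrow> real"
  assumes cont: "\<And>i. i<n \<Longrightarrow> continuous_on {T..} (\<lambda>t. u t i)"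
    and der: "\<And>i t. i<n \<Longrightarrow> T < t \<Longrightarrow> ((\<lambda>s. u s i) has_real_derivative u' t i) (at t)"
    and init: "\<And>i. i<n \<Longrightarrow> c' i < u T i" and cc: "\<And>i. i<n \<Longrightarrow> c i < c' i"
    and bar: "\<And>t i. T < t \<Longrightarrow> (\<forall>j<n. c j \<le> u t j) \<Longrightarrow> i<n \<Longrightarrow> u t i \<le> c' i \<Longrightarrow> 0 < u' t i"
  shows "\<forall>t\<ge>T. \<forall>i<n. c i \<le> u t i"
proof (rule ccontr)
  assume "\<not> ?thesis"
  then obtain t2 k where t2: "T \<le> t2" "k < n" "u t2 k < c k" by force
  define Bad where "Bad = (\<Union>j\<in>{..<n}. {t \<in> {T..t2}. u t j \<le> c j})"
  have contj: "continuous_on {T..t2} (\<lambda>t. u t j)" if "j<n" for j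
    using cont[OF that] by (rule continuous_on_subset) auto
  have "closed Bad" unfolding Bad_def
    by (intro closed_UN finite_lessThan ballI continuous_on_closed_Collect_le contj continuous_on_const) auto
  moreover have "t2 \<in> Bad" using t2 unfolding Bad_def by force
  moreover have "bdd_below Bad" unfolding Bad_def by (rule bdd_belowI[of _ T]) auto
  ultimately have "Inf Bad \<in> Bad" using closed_contains_Inf by blast
  define \<tau> where "\<tau> = Inf Bad"
  obtain j0 where j0: "j0 < n" "T \<le> \<tau>" "\<tau> \<le> t2" "u \<tau> j0 \<le> c j0"
    using \<open>Inf Bad \<in> Bad\<close> unfolding \<tau>_def Bad_def by auto
  have before: "c j < u s j" if "T \<le> s" "s < \<tau>" "j < n" for s j
  proof (rule ccontr)
    assume "\<not> c j < u s j"
    hence "s \<in> Bad" unfolding Bad_def using that j0 by force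
    hence "\<tau> \<le> s" unfolding \<tau>_def using \<open>bdd_below Bad\<close> by (rule cInf_lower)
    thus False using that by simp
  qed
  have "T \<noteq> \<tau>" using init[OF j0(1)] cc[OF j0(1)] j0 by force
  hence Tt: "T < \<tau>" using j0 by simp
  define S' where "S' = {t \<in> {T..\<tau>}. c' j0 \<le> u t j0}"
  have "closed S'" unfolding S'_def
    by (intro continuous_on_closed_Collect_le continuous_on_const) 
       (use cont[OF j0(1)] in \<open>auto intro: continuous_on_subset\<close>)
  moreover have "T \<in> S'" unfolding S'_def using Tt init[OF j0(1)] by auto
  moreover have "bdd_above S'" unfolding S'_def by (rule bdd_aboveI[of _ \<tau>]) auto
  ultimately have "Sup S' \<in> S'" using closed_contains_Sup by blast
  define \<sigma> where "\<sigma> = Sup S'"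
  have s1: "T \<le> \<sigma>" "\<sigma> \<le> \<tau>" "c' j0 \<le> u \<sigma> j0" using \<open>Sup S' \<in> S'\<close> unfolding \<sigma>_def S'_def by auto
  have after: "u s j0 < c' j0" if "\<sigma> < s" "s \<le> \<tau>" for s
  proof (rule ccontr)
    assume "\<not> u s j0 < c' j0"
    hence "s \<in> S'" unfolding S'_def using that s1 by auto
    hence "s \<le> \<sigma>" unfolding \<sigma>_def using \<open>bdd_above S'\<close> by (rule cSup_upper)
    thus False using that by simp
  qed
  have "u \<sigma> j0 \<le> u \<tau> j0"
  proof (rule DERIV_nonneg_imp_increasing_open[OF s1(2)])
    fix s assume s: "\<sigma> < s" "s < \<tau>"
    have "0 < u' s j0"
    proof (rule bar)
      show "\<forall>j<n. c j \<le> u s j" using before[of s] s s1 by (auto intro: less_imp_le)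
      show "u s j0 \<le> c' j0" using after[of s] s by (auto intro: less_imp_le)
    qed (use s s1 j0 in auto)
    thus "\<exists>y. ((\<lambda>s. u s j0) has_real_derivative y) (at s) \<and> 0 \<le> y"
      using der[OF j0(1), of s] s s1 by (intro exI[of _ "u' s j0"]) auto
  next
    show "continuous_on {\<sigma>..\<tau>} (\<lambda>t. u t j0)"
      using cont[OF j0(1)] by (rule continuous_on_subset) (use s1 in auto)
  qed
  thus False using s1 j0 cc[OF j0(1)] by simp
qed

lemma field_eta1:
  "field n G x y z w psi (\<lambda>_. 1) lam t q i =
     - psi i * q i + (\<Sum>j\<in>nbrs n G i. (x - z) + (z - x + w - y) * pD (lam j t) (q j))"
proof -
  define p where "p j = pD (lam j t) (q j)" for j
  have "(\<Sum>j\<in>nbrs n G i. p j * w + (1 - p j) * x) - (\<Sum>j\<in>nbrs n G i. p j * y + (1 - p j) * z)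
        = (\<Sum>j\<in>nbrs n G i. (p j * w + (1 - p j) * x) - (p j * y + (1 - p j) * z))"
    by (rule sum_subtractf[symmetric])
  also have "\<dots> = (\<Sum>j\<in>nbrs n G i. (x - z) + (z - x + w - y) * p j)"
    by (rule sum.cong) (simp_all add: algebra_simps)
  finally have e: "(\<Sum>j\<in>nbrs n G i. p j * w + (1 - p j) * x) - (\<Sum>j\<in>nbrs n G i. p j * y + (1 - p j) * z)
        = (\<Sum>j\<in>nbrs n G i. (x - z) + (z - x + w - y) * p j)" .
  show ?thesis unfolding field_def Let_def p_def[symmetric] using e by simp
qed

lemma nbrs_sub: "nbrs n G i \<subseteq> {..<n}" by (auto simp: nbrs_def)
lemma nbrs_fin: "finite (nbrs n G i)" by (rule finite_subset[OF nbrs_sub]) simp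
lemma deg_le: "deg n G i \<le> n" unfolding deg_def using card_mono[OF finite_lessThan nbrs_sub] by simp

lemma deg_pos:
  assumes "connected_graph n G" "n \<ge> 2" "i < n"
  shows "deg n G i \<ge> 1"
proof -
  define j where "j = (if i = 0 then 1 else (0::nat))"
  have j: "j < n" "j \<noteq> i" using assms by (auto simp: j_def)
  let ?R = "\<lambda>a b. a < n \<and> b < n \<and> G a b"
  have "?R\<^sup>*\<^sup>* i j" using assms(1) assms(3) j unfolding connected_graph_def by blast
  then obtain k where "?R i k" using j(2) by (cases rule: converse_rtranclpE) auto
  hence "k \<in> nbrs n G i" by (auto simp: nbrs_def)
  hence "nbrs n G i \<noteq> {}" by blast
  thus ?thesis unfolding deg_def using nbrs_fin[of n G i]
    by (simp add: Suc_le_eq card_gt_0_iff)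
qed

lemma sol_facts:
  assumes "is_solution n G x y z w psi eta lam q0 q" "i < n"
  shows "q 0 i = q0 i"
    and "continuous_on {0..} (\<lambda>t. q t i)"
    and "\<And>t. 0 < t \<Longrightarrow> ((\<lambda>s. q s i) has_real_derivative field n G x y z w psi eta lam t (q t) i) (at t)"
proof -
  show "q 0 i = q0 i" using assms unfolding is_solution_def by blast
  have d: "((\<lambda>s. q s i) has_real_derivative field n G x y z w psi eta lam t (q t) i) (at t within {0..})"
    if "0 \<le> t" for t using assms that unfolding is_solution_def by blast
  show "continuous_on {0..} (\<lambda>t. q t i)"
    unfolding continuous_on_eq_continuous_within using d DERIV_continuous by blast
  fix t :: real assume "0 < t"
  hence "at t within {0..} = at t" by (intro at_within_interior) auto
  thus "((\<lambda>s. q s i) has_real_derivative field n G x y z w psi eta lam t (q t) i) (at t)"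
    using d[of t] \<open>0 < t\<close> by simp
qed

lemma exists_sol:
  assumes lamc: "\<And>j. j<n \<Longrightarrow> continuous_on {0..} (lam j)"
    and lam0: "\<And>j t. j<n \<Longrightarrow> 0 \<le> t \<Longrightarrow> 0 \<le> lam j t"
    and lammono: "\<And>j s t. j<n \<Longrightarrow> 0 \<le> s \<Longrightarrow> s \<le> t \<Longrightarrow> lam j s \<le> lam j t"
    and Kpos: "0 \<le> z - x + w - y"
  shows "\<exists>q. is_solution n G x y z w psi (\<lambda>_. 1) lam q0 q"
proof -
  define K where "K = z - x + w - y"
  have K: "0 \<le> K" using Kpos by (simp add: K_def)
  define F where "F t v i = - psi i * v i + (\<Sum>j\<in>nbrs n G i. (x - z) + K * pD (lam j t) (v j))" for t v i
  have Feq: "field n G x y z w psi (\<lambda>_. 1) lam t v i = F t v i" for t v i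
    by (simp add: field_eta1 F_def K_def)
  have "\<exists>q. (\<forall>i<n. q 0 i = q0 i) \<and>
             (\<forall>t\<ge>0. \<forall>i<n. ((\<lambda>s. q s i) has_real_derivative F t (q t) i) (at t within {0..}))"
  proof (rule picard_exists)
    fix u :: "real \<Rightarrow> nat \<Rightarrow> real" and i assume i: "i < n"
      and uc: "\<And>j. j<n \<Longrightarrow> continuous_on {0..} (\<lambda>t. u t j)"
    have "continuous_on {0..} (\<lambda>t. (x - z) + K * pD (lam j t) (u t j))" if "j \<in> nbrs n G i" for j
      using that nbrs_sub[of n G i] by (intro continuous_intros pD_cont lamc uc) auto
    hence "continuous_on {0..} (\<lambda>t. \<Sum>j\<in>nbrs n G i. (x - z) + K * pD (lam j t) (u t j))"
      by (rule continuous_on_sum)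
    thus "continuous_on {0..} (\<lambda>t. F t (u t) i)"
      unfolding F_def by (rule continuous_on_add[OF continuous_on_mult[OF continuous_on_const uc[OF i]]])
  next
    fix T :: real assume T: "T \<ge> 0"
    define P where "P = (\<Sum>i<n. \<bar>psi i\<bar>)"
    define \<Lambda> where "\<Lambda> = (\<Sum>j<n. lam j T)"
    have P0: "0 \<le> P" by (simp add: P_def sum_nonneg)
    have L0: "0 \<le> \<Lambda>" unfolding \<Lambda>_def using lam0 T by (intro sum_nonneg) auto
    show "\<exists>L\<ge>0. \<forall>t\<in>{0..T}. \<forall>u v. \<forall>i<n. \<bar>F t u i - F t v i\<bar> \<le> L * (\<Sum>j<n. \<bar>u j - v j\<bar>)"
    proof (intro exI[of _ "P + K * \<Lambda>"] conjI ballI allI impI)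
      show "0 \<le> P + K * \<Lambda>" using P0 L0 K by simp
      fix t and u v :: "nat \<Rightarrow> real" and i assume t: "t \<in> {0..T}" and i: "i < n"
      define \<Sigma> where "\<Sigma> = (\<Sum>j<n. \<bar>u j - v j\<bar>)"
      have S0: "0 \<le> \<Sigma>" by (simp add: \<Sigma>_def sum_nonneg)
      have "F t u i - F t v i = - psi i * (u i - v i)
              + K * (\<Sum>j\<in>nbrs n G i. pD (lam j t) (u j) - pD (lam j t) (v j))"
      proof -
        have "(\<Sum>j\<in>nbrs n G i. (x - z) + K * pD (lam j t) (u j)) - (\<Sum>j\<in>nbrs n G i. (x - z) + K * pD (lam j t) (v j))
              = K * (\<Sum>j\<in>nbrs n G i. pD (lam j t) (u j) - pD (lam j t) (v j))"
          by (simp add: sum_subtractf[symmetric] sum_distrib_left right_diff_distrib)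
        thus ?thesis unfolding F_def by (simp add: right_diff_distrib)
      qed
      hence A: "\<bar>F t u i - F t v i\<bar> \<le> \<bar>- psi i * (u i - v i)\<bar>
              + \<bar>K * (\<Sum>j\<in>nbrs n G i. pD (lam j t) (u j) - pD (lam j t) (v j))\<bar>"
        by (simp only: abs_triangle_ineq)
      have A2: "\<bar>K * (\<Sum>j\<in>nbrs n G i. pD (lam j t) (u j) - pD (lam j t) (v j))\<bar>
           \<le> K * (\<Sum>j\<in>nbrs n G i. \<bar>pD (lam j t) (u j) - pD (lam j t) (v j)\<bar>)"
        unfolding abs_mult using K by (simp add: mult_left_mono sum_abs)
      have A3: "\<bar>- psi i * (u i - v i)\<bar> = \<bar>psi i\<bar> * \<bar>u i - v i\<bar>"
        by (simp add: abs_mult)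
      have B: "\<bar>psi i\<bar> * \<bar>u i - v i\<bar> \<le> P * \<Sigma>"
      proof (rule mult_mono)
        show "\<bar>psi i\<bar> \<le> P" unfolding P_def using i by (intro member_le_sum) auto
        show "\<bar>u i - v i\<bar> \<le> \<Sigma>" unfolding \<Sigma>_def using i by (intro member_le_sum) auto
      qed (use P0 in auto)
      have C1: "(\<Sum>j\<in>nbrs n G i. \<bar>pD (lam j t) (u j) - pD (lam j t) (v j)\<bar>)
                 \<le> (\<Sum>j\<in>nbrs n G i. \<Lambda> * \<bar>u j - v j\<bar>)"
      proof (rule sum_mono)
        fix j assume j: "j \<in> nbrs n G i"
        hence jn: "j < n" using nbrs_sub by blast
        have "\<bar>pD (lam j t) (u j) - pD (lam j t) (v j)\<bar> \<le> lam j t * \<bar>u j - v j\<bar>"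
          by (rule pD_lip) (use lam0 jn t in auto)
        also have "lam j t \<le> \<Lambda>"
        proof -
          have "lam j t \<le> lam j T" using lammono[OF jn] t by auto
          also have "lam j T \<le> \<Lambda>" unfolding \<Lambda>_def using jn lam0 T
            by (intro member_le_sum) auto
          finally show ?thesis .
        qed
        finally show "\<bar>pD (lam j t) (u j) - pD (lam j t) (v j)\<bar> \<le> \<Lambda> * \<bar>u j - v j\<bar>"
          by (simp add: mult_right_mono)
      qed
      have C2: "(\<Sum>j\<in>nbrs n G i. \<Lambda> * \<bar>u j - v j\<bar>) \<le> \<Lambda> * \<Sigma>"
        unfolding \<Sigma>_def sum_distrib_left[symmetric]
        by (intro mult_left_mono sum_mono2 nbrs_sub L0) auto
      have "K * (\<Sum>j\<in>nbrs n G i. \<bar>pD (lam j t) (u j) - pD (lam j t) (v j)\<bar>) \<le> K * (\<Lambda> * \<Sigma>)"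
        using C1 C2 K by (intro mult_left_mono) auto
      hence "\<bar>F t u i - F t v i\<bar> \<le> P * \<Sigma> + K * (\<Lambda> * \<Sigma>)"
        using A A2 A3 B by linarith
      thus "\<bar>F t u i - F t v i\<bar> \<le> (P + K * \<Lambda>) * \<Sigma>"
        by (simp add: algebra_simps)
    qed
  next
    define C where "C = (\<Sum>i<n. \<bar>psi i\<bar> * \<bar>q0 i\<bar>) + real n * (\<bar>x - z\<bar> + K)"
    show "\<exists>C. \<forall>t\<ge>0. \<forall>i<n. \<bar>F t q0 i\<bar> \<le> C"
    proof (intro exI[of _ C] allI impI)
      fix t :: real and i assume i: "i < n"
      have "\<bar>F t q0 i\<bar> \<le> \<bar>psi i\<bar> * \<bar>q0 i\<bar> + (\<Sum>j\<in>nbrs n G i. \<bar>x - z\<bar> + K)"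
      proof -
        have "\<bar>(x - z) + K * pD (lam j t) (q0 j)\<bar> \<le> \<bar>x - z\<bar> + K" for j
        proof -
          have "\<bar>K * pD (lam j t) (q0 j)\<bar> \<le> K" using K pD_bounds[of "lam j t" "q0 j"]
            by (simp add: abs_mult mult_left_le)
          thus ?thesis by linarith
        qed
        hence "\<bar>\<Sum>j\<in>nbrs n G i. (x - z) + K * pD (lam j t) (q0 j)\<bar> \<le> (\<Sum>j\<in>nbrs n G i. \<bar>x - z\<bar> + K)"
          by (intro order.trans[OF sum_abs] sum_mono) auto
        moreover have "\<bar>F t q0 i\<bar> \<le> \<bar>- psi i * q0 i\<bar> + \<bar>\<Sum>j\<in>nbrs n G i. (x - z) + K * pD (lam j t) (q0 j)\<bar>"
          unfolding F_def by (rule abs_triangle_ineq)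
        ultimately show ?thesis by (simp add: abs_mult)
      qed
      also have "\<dots> \<le> C"
      proof -
        have "\<bar>psi i\<bar> * \<bar>q0 i\<bar> \<le> (\<Sum>i<n. \<bar>psi i\<bar> * \<bar>q0 i\<bar>)"
          using i by (intro member_le_sum) auto
        moreover have "(\<Sum>j\<in>nbrs n G i. \<bar>x - z\<bar> + K) \<le> real n * (\<bar>x - z\<bar> + K)"
          using deg_le[of n G i] K by (simp add: deg_def mult_right_mono)
        ultimately show ?thesis unfolding C_def by simp
      qed
      finally show "\<bar>F t q0 i\<bar> \<le> C" .
    qed
  qed
  then obtain q where "\<forall>i<n. q 0 i = q0 i"
      "\<forall>t\<ge>0. \<forall>i<n. ((\<lambda>s. q s i) has_real_derivative F t (q t) i) (at t within {0..})" by blast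
  thus ?thesis unfolding is_solution_def Feq by blast
qed



lemma lin_at_top: "c > 0 \<Longrightarrow> filterlim (\<lambda>t::real. c * (1 + t)) at_top at_top"
  unfolding filterlim_at_top eventually_at_top_linorder
proof (intro allI exI[of _ "Z / c" for Z] allI impI)
  fix Z t :: real assume c: "c > 0" and t: "Z / c \<le> t"
  hence "Z \<le> c * t" using c by (simp add: divide_le_eq mult.commute)
  thus "Z \<le> c * (1 + t)" using c by (simp add: distrib_left)
qed

lemma exp_lin_0: assumes c: "c > 0" shows "((\<lambda>t::real. exp (- (c * (1 + t)))) \<longlongrightarrow> 0) at_top"
proof -
  have "filterlim (\<lambda>t::real. - (c * (1 + t))) at_bot at_top"
    using lin_at_top[OF c] by (simp add: filterlim_uminus_at_bot)
  thus ?thesis by (rule filterlim_compose[OF exp_at_bot])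
qed

lemma bnd_aux1: "0 < e \<Longrightarrow> e \<le> 1 \<Longrightarrow> 0 \<le> (M::real) \<Longrightarrow> M + (q - M) * e \<le> M + \<bar>q\<bar>"
proof -
  assume a: "0 < e" "e \<le> 1" "0 \<le> M"
  have "(q - M) * e \<le> \<bar>q\<bar> * e" using a by (intro mult_right_mono) auto
  also have "\<dots> \<le> \<bar>q\<bar>" using a by (simp add: mult_left_le)
  finally show ?thesis by simp
qed

lemma bnd_aux2: "0 < e \<Longrightarrow> e \<le> 1 \<Longrightarrow> 0 \<le> (M::real) \<Longrightarrow> - M - \<bar>q\<bar> \<le> - M + (q + M) * e"
  using bnd_aux1[of e M "-q"] by (simp add: algebra_simps)

lemma sol_bound:
  assumes sol: "is_solution n G x y z w psi (\<lambda>_. 1) lam q0 q" and i: "i < n"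
    and psi: "psi i > 0" and xz: "x < z" "y < w" and t: "0 \<le> t"
    and lam0: "\<And>j t. j < n \<Longrightarrow> 0 \<le> t \<Longrightarrow> 0 \<le> lam j t"
  shows "\<bar>q t i\<bar> \<le> \<bar>q0 i\<bar> + real n * (z - x + w - y) / psi i"
proof -
  define K where "K = z - x + w - y"
  define M where "M = real n * K"
  have K: "0 < K" using xz by (simp add: K_def)
  have M: "0 \<le> M" using K by (simp add: M_def)
  define f where "f t = field n G x y z w psi (\<lambda>_. 1) lam t (q t) i" for t
  have Sb: "\<bar>f s + psi i * q s i\<bar> \<le> M" for s
  proof -
    have "f s + psi i * q s i = (\<Sum>j\<in>nbrs n G i. (x - z) + K * pD (lam j s) (q s j))"
      by (simp add: f_def field_eta1 K_def)
    also have "\<bar>\<dots>\<bar> \<le> (\<Sum>j\<in>nbrs n G i. K)"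
    proof (intro order.trans[OF sum_abs] sum_mono)
      fix j
      have "0 \<le> pD (lam j s) (q s j)" "pD (lam j s) (q s j) \<le> 1" by (rule pD_bounds)+
      hence "0 \<le> K * pD (lam j s) (q s j)" "K * pD (lam j s) (q s j) \<le> K"
        using K by (auto simp: mult_left_le)
      thus "\<bar>(x - z) + K * pD (lam j s) (q s j)\<bar> \<le> K" using xz unfolding K_def by linarith
    qed
    also have "\<dots> \<le> M" using deg_le[of n G i] K by (simp add: M_def deg_def)
    finally show ?thesis .
  qed
  have Sb1: "f s \<le> - psi i * q s i + M" for s using Sb[of s] by linarith
  have Sb2: "- psi i * q s i + (-M) \<le> f s" for s using Sb[of s] by linarith
  have der: "\<And>s. 0 < s \<Longrightarrow> s < t \<Longrightarrow> ((\<lambda>s. q s i) has_real_derivative f s) (at s)"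
    using sol_facts(3)[OF sol i] by (simp add: f_def)
  have cont: "continuous_on {0..t} (\<lambda>s. q s i)"
    using sol_facts(2)[OF sol i] by (rule continuous_on_subset) auto
  have e: "0 < exp (- psi i * (t - 0))" "exp (- psi i * (t - 0)) \<le> 1" using psi t by auto
  have up: "q t i \<le> M/psi i + (q 0 i - M/psi i) * exp (- psi i * (t - 0))"
    by (rule cmp_up[OF t psi der cont]) (use Sb1 in \<open>simp_all add: algebra_simps\<close>)
  have lo: "(-M)/psi i + (q 0 i - (-M)/psi i) * exp (- psi i * (t - 0)) \<le> q t i"
    by (rule cmp_lo[OF t psi der cont]) (use Sb2 in \<open>simp_all add: algebra_simps\<close>)
  have M': "0 \<le> M / psi i" using M psi by simp
  have q00: "q 0 i = q0 i" using sol_facts(1)[OF sol i] .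
  have "q t i \<le> M / psi i + \<bar>q0 i\<bar>"
    using up bnd_aux1[OF e M', of "q0 i"] unfolding q00 by linarith
  moreover have "- (M / psi i) - \<bar>q0 i\<bar> \<le> q t i"
    using lo bnd_aux2[OF e M', of "q0 i"] unfolding q00 by (simp add: algebra_simps)
  ultimately show ?thesis by (simp add: M_def K_def abs_le_iff)
qed

lemma sum_lo:
  assumes "finite A" "card A \<ge> 1" "\<And>j. j \<in> A \<Longrightarrow> lo \<le> f j" "0 \<le> (lo::real)"
  shows "lo \<le> sum f A"
proof -
  have "real (card A) * lo \<le> sum f A" by (rule sum_bounded_below) (use assms in auto)
  moreover have "lo \<le> real (card A) * lo" using assms(2,4) by (simp add: mult_le_cancel_right1)
  ultimately show ?thesis by linarith
qed

lemma part1: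
  assumes n2: "n \<ge> 2" and conn: "connected_graph n G"
    and zw: "z > w" "w > x" "x > y" "w + x > z + y"
  shows "\<exists>psi eta lam. behavioural_params n psi eta lam \<and> actions_converge n G x y z w psi eta lam q0 1"
proof -
  define K where "K = z - x + w - y"
  define a0 where "a0 = (w + x - z - y)/2"
  define M where "M = real n * K"
  define B where "B = (\<Sum>i<n. \<bar>q0 i\<bar>) + M"
  define W where "W = 4 * (B + a0/2) / a0"
  define \<delta> where "\<delta> = a0 / (2*K)"
  define \<epsilon> where "\<epsilon> = \<delta> / ((1 + W) * (B + 1))"
  have K: "K > 0" using zw by (simp add: K_def)
  have a0: "a0 > 0" using zw by (simp add: a0_def)
  have M: "M \<ge> 0" using K by (simp add: M_def)
  have B: "B \<ge> 0" using M by (simp add: B_def sum_nonneg)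
  have W: "W > 0" using B a0 by (simp add: W_def)
  have \<delta>: "\<delta> > 0" using a0 K by (simp add: \<delta>_def)
  have \<epsilon>: "\<epsilon> > 0" using \<delta> W B by (simp add: \<epsilon>_def)
  have Ka0: "x - z + K * (1/2) = a0" by (simp add: K_def a0_def field_simps)
  have Kd: "K * \<delta> = a0 / 2" using K by (simp add: \<delta>_def)
  define lam where "lam = (\<lambda>(j::nat) (t::real). \<epsilon> * (1 + t))"
  define psi where "psi = (\<lambda>(j::nat). (1::real))"
  have bp: "behavioural_params n psi (\<lambda>_. 1) lam"
    unfolding behavioural_params_def
  proof (intro allI impI conjI)
    fix i assume "i < n"
    show "0 < psi i" "0 \<le> (1::real)" "(1::real) \<le> 1" by (simp_all add: psi_def)
    show "strict_mono_on {0..} (lam i)" unfolding strict_mono_on_def lam_def using \<epsilon> by simp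
    show "filterlim (lam i) at_top at_top" unfolding lam_def using lin_at_top[OF \<epsilon>] by simp
    fix t :: real assume "0 \<le> t"
    thus "0 < lam i t" using \<epsilon> by (simp add: lam_def)
  qed
  have ex: "\<exists>q. is_solution n G x y z w psi (\<lambda>_. 1) lam q0 q"
  proof (rule exists_sol)
    fix j assume "j < n"
    show "continuous_on {0..} (lam j)" unfolding lam_def by (intro continuous_intros)
    fix t :: real assume "0 \<le> t"
    thus "0 \<le> lam j t" using \<epsilon> by (simp add: lam_def)
  next
    fix j and s t :: real assume "0 \<le> s" "s \<le> t"
    thus "lam j s \<le> lam j t" using \<epsilon> by (simp add: lam_def)
  next
    show "0 \<le> z - x + w - y" using K by (simp add: K_def)
  qed
  have conv: "\<forall>i<n. ((\<lambda>t. pD (lam i t) (q t i)) \<longlongrightarrow> 1) at_top"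
    if sol: "is_solution n G x y z w psi (\<lambda>_. 1) lam q0 q" for q
  proof -
    define f where "f t i = field n G x y z w psi (\<lambda>_. 1) lam t (q t) i" for t i
    define S where "S t i = (\<Sum>j\<in>nbrs n G i. (x - z) + K * pD (lam j t) (q t j))" for t i
    have fS: "f t i = - q t i + S t i" for t i
      by (simp add: f_def S_def field_eta1 psi_def K_def)
    have der: "((\<lambda>s. q s i) has_real_derivative f t i) (at t)" if "i < n" "0 < t" for i t
      using sol_facts(3)[OF sol that(1) that(2)] by (simp add: f_def)
    have cont: "continuous_on {0..} (\<lambda>t. q t i)" if "i < n" for i
      using sol_facts(2)[OF sol that] .
    have qb: "\<bar>q t i\<bar> \<le> B" if i: "i < n" and t: "0 \<le> t" for i t
    proof -
      have "\<bar>q t i\<bar> \<le> \<bar>q0 i\<bar> + real n * (z - x + w - y) / psi i"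
        by (rule sol_bound[OF sol i _ _ _ t]) (use zw in \<open>auto simp: psi_def lam_def\<close>, use \<epsilon> t in simp)
      moreover have "\<bar>q0 i\<bar> \<le> (\<Sum>i<n. \<bar>q0 i\<bar>)" using i by (intro member_le_sum) auto
      ultimately show ?thesis by (simp add: B_def M_def K_def psi_def)
    qed
    have Slo: "lo \<le> S t i"
      if "i < n" "\<And>j. j \<in> nbrs n G i \<Longrightarrow> lo \<le> (x - z) + K * pD (lam j t) (q t j)" "0 \<le> lo" for t i lo
      unfolding S_def by (rule sum_lo[OF nbrs_fin]) (use deg_pos[OF conn n2 that(1)] that in \<open>auto simp: deg_def\<close>)
    have win: "- q t i + a0/2 \<le> f t i" if i: "i < n" and t: "0 \<le> t" "t \<le> W" for i t
    proof -
      have "a0/2 \<le> S t i"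
      proof (rule Slo[OF i])
        fix j assume j: "j \<in> nbrs n G i"
        hence jn: "j < n" using nbrs_sub by blast
        have "\<bar>pD (lam j t) (q t j) - 1/2\<bar> \<le> \<bar>lam j t * q t j\<bar>" by (rule pD_half)
        also have "\<dots> = \<epsilon> * (1 + t) * \<bar>q t j\<bar>" using \<epsilon> t by (simp add: lam_def abs_mult)
        also have "\<dots> \<le> \<epsilon> * (1 + W) * (B + 1)"
          using qb[OF jn t(1)] \<epsilon> t by (intro mult_mono) auto
        also have "\<dots> = \<delta>" using W B by (simp add: \<epsilon>_def)
        finally have "1/2 - \<delta> \<le> pD (lam j t) (q t j)" by linarith
        hence "K * (1/2 - \<delta>) \<le> K * pD (lam j t) (q t j)" using K by (intro mult_left_mono) auto
        thus "a0/2 \<le> (x - z) + K * pD (lam j t) (q t j)" using Ka0 Kd by (simp add: algebra_simps)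
      qed (use a0 in auto)
      thus ?thesis by (simp add: fS)
    qed
    have qW: "a0/4 \<le> q W i" if i: "i < n" for i
    proof -
      have "(a0/2)/1 + (q 0 i - (a0/2)/1) * exp (- 1 * (W - 0)) \<le> q W i"
      proof (rule cmp_lo[where u' = "\<lambda>t. f t i"])
        show "continuous_on {0..W} (\<lambda>t. q t i)" using cont[OF i] by (rule continuous_on_subset) auto
        fix t assume "0 < t" "t < W"
        thus "((\<lambda>s. q s i) has_real_derivative f t i) (at t)" using der[OF i] by simp
        show "- 1 * q t i + a0/2 \<le> f t i" using win[OF i] \<open>0 < t\<close> \<open>t < W\<close> by simp
      qed (use W in auto)
      moreover have "q 0 i \<ge> - B" using qb[OF i, of 0] by simp
      moreover have eW: "exp (- W) \<le> a0 / (4 * (B + a0/2))"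
      proof -
        have "W \<le> exp W" using exp_ge_add_one_self[of W] by linarith
        hence "1 / exp W \<le> 1 / W" using W by (intro divide_left_mono) auto
        moreover have "1 / W = a0 / (4 * (B + a0/2))" by (simp add: W_def)
        moreover have "exp (- W) = 1 / exp W" by (simp add: exp_minus inverse_eq_divide)
        ultimately show ?thesis by simp
      qed
      moreover have BW: "(B + a0/2) * exp (- W) \<le> a0/4"
      proof -
        have "(B + a0/2) * exp (- W) \<le> (B + a0/2) * (a0 / (4 * (B + a0/2)))"
          by (rule mult_left_mono[OF eW]) (use B a0 in simp)
        also have "\<dots> = a0/4"
        proof -
          have "B + a0/2 > 0" using B a0 by simp
          thus ?thesis by (simp add: field_simps)
        qed
        finally show ?thesis .
      qed
      ultimately have "a0/2 + (q 0 i - a0/2) * exp (- W) \<le> q W i"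
        "(- B - a0/2) * exp (- W) \<le> (q 0 i - a0/2) * exp (- W)"
        by (auto intro!: mult_right_mono)
      thus ?thesis using BW by (simp add: algebra_simps)
    qed
    have trapped: "\<forall>t\<ge>W. \<forall>i<n. a0/16 \<le> q t i"
    proof (rule trap[where u' = f and c' = "\<lambda>_. a0/8"])
      fix i assume i: "i < n"
      show "continuous_on {W..} (\<lambda>t. q t i)" using cont[OF i] by (rule continuous_on_subset) (use W in auto)
      show "a0/8 < q W i" using qW[OF i] a0 by simp
      show "a0/16 < a0/8" using a0 by simp
      fix t assume "W < t"
      thus "((\<lambda>s. q s i) has_real_derivative f t i) (at t)" using der[OF i] W by simp
    next
      fix t i assume t: "W < t" and all: "\<forall>j<n. a0/16 \<le> q t j" and i: "i < n" and qi: "q t i \<le> a0/8"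
      have "a0 \<le> S t i"
      proof (rule Slo[OF i])
        fix j assume j: "j \<in> nbrs n G i"
        hence jn: "j < n" using nbrs_sub by blast
        have "1/2 \<le> pD (lam j t) (q t j)"
          by (rule pD_ge_half) (use all jn a0 \<epsilon> t W in \<open>auto simp: lam_def\<close>)
        hence "K * (1/2) \<le> K * pD (lam j t) (q t j)" using K by (intro mult_left_mono) auto
        thus "a0 \<le> (x - z) + K * pD (lam j t) (q t j)" using Ka0 by simp
      qed (use a0 in auto)
      thus "0 < f t i" using qi a0 by (simp add: fS)
    qed
    show ?thesis
    proof (intro allI impI)
      fix i assume i: "i < n"
      define c where "c = \<epsilon> * (a0/16)"
      have c: "c > 0" using \<epsilon> a0 by (simp add: c_def)
      show "((\<lambda>t. pD (lam i t) (q t i)) \<longlongrightarrow> 1) at_top"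
      proof (rule tendsto_sandwich[where f = "\<lambda>t. 1 - exp (- (c * (1 + t)))" and h = "\<lambda>_. 1"])
        show "\<forall>\<^sub>F t in at_top. 1 - exp (- (c * (1 + t))) \<le> pD (lam i t) (q t i)"
          unfolding eventually_at_top_linorder
        proof (intro exI[of _ W] allI impI)
          fix t assume t: "W \<le> t"
          have "c * (1 + t) \<le> lam i t * q t i"
            unfolding c_def lam_def using trapped t i \<epsilon> W
            by (simp add: mult.assoc mult_left_mono)
          hence "exp (- (lam i t * q t i)) \<le> exp (- (c * (1 + t)))" by simp
          thus "1 - exp (- (c * (1 + t))) \<le> pD (lam i t) (q t i)"
            using pD_ge_exp[of "lam i t" "q t i"] by linarith
        qed
        show "\<forall>\<^sub>F t in at_top. pD (lam i t) (q t i) \<le> 1" by (simp add: pD_bounds)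
        show "((\<lambda>t. 1 - exp (- (c * (1 + t)))) \<longlongrightarrow> 1) at_top"
          using tendsto_diff[OF tendsto_const exp_lin_0[OF c], of 1] by simp
      qed simp
    qed
  qed
  show ?thesis
    by (intro exI[of _ psi] exI[of _ "\<lambda>_. 1"] exI[of _ lam] conjI bp)
       (use ex conv in \<open>auto simp: actions_converge_def\<close>)
qed



lemma exp_neg_sq: fixes s :: real assumes s: "s > 0" shows "exp (- s) \<le> 4 / s^2"
proof -
  have "s/2 \<le> exp (s/2)" using exp_ge_add_one_self[of "s/2"] by linarith
  hence "(s/2)^2 \<le> exp (s/2) ^ 2" using s by (intro power_mono) auto
  also have "exp (s/2) ^ 2 = exp s" by (simp add: power2_eq_square exp_add[symmetric])
  finally have "s^2/4 \<le> exp s" by (simp add: power_divide)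
  hence "1 / exp s \<le> 1 / (s^2/4)" using s by (intro divide_left_mono) auto
  thus ?thesis by (simp add: exp_minus inverse_eq_divide)
qed

lemma rank_exists:
  assumes fin: "finite D" and P: "\<And>S. S \<subseteq> D \<Longrightarrow> S \<noteq> {} \<Longrightarrow> \<exists>i\<in>S. P S i"
  shows "\<exists>r::nat\<Rightarrow>nat. \<forall>i\<in>D. r i < card D \<and> P {j\<in>D. r i \<le> r j} i"
proof -
  have "\<forall>S. S \<subseteq> D \<longrightarrow> card S = m \<longrightarrow> (\<exists>r::nat\<Rightarrow>nat. \<forall>i\<in>S. r i < card S \<and> P {j\<in>S. r i \<le> r j} i)" for m
  proof (induction m)
    case 0
    show ?case
    proof (intro allI impI exI[of _ "\<lambda>_. 0"])
      fix S assume "S \<subseteq> D" "card S = 0"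
      hence "S = {}" using fin finite_subset card_0_eq by metis
      thus "\<forall>i\<in>S. (0::nat) < card S \<and> P {j \<in> S. (0::nat) \<le> 0} i" by simp
    qed
  next
    case (Suc m)
    show ?case
    proof (intro allI impI)
      fix S assume S: "S \<subseteq> D" "card S = Suc m"
      have finS: "finite S" using S(1) fin finite_subset by auto
      have "S \<noteq> {}" using S(2) by auto
      then obtain i0 where i0: "i0 \<in> S" "P S i0" using P S(1) by blast
      define S' where "S' = S - {i0}"
      have S': "S' \<subseteq> D" "card S' = m" using S i0 finS by (auto simp: S'_def)
      obtain r' where r': "\<forall>i\<in>S'. r' i < card S' \<and> P {j\<in>S'. r' i \<le> r' j} i"
        using Suc.IH S' by blast
      define r where "r i = (if i = i0 then 0 else Suc (r' i))" for i
      have "\<forall>i\<in>S. r i < card S \<and> P {j\<in>S. r i \<le> r j} i"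
      proof
        fix i assume i: "i \<in> S"
        show "r i < card S \<and> P {j\<in>S. r i \<le> r j} i"
        proof (cases "i = i0")
          case True
          have "{j\<in>S. r i \<le> r j} = S" using True by (auto simp: r_def)
          thus ?thesis using True i0 S(2) by (simp add: r_def)
        next
          case False
          hence iS': "i \<in> S'" using i by (simp add: S'_def)
          have "{j\<in>S. r i \<le> r j} = {j\<in>S'. r' i \<le> r' j}"
            using False by (auto simp: r_def S'_def)
          thus ?thesis using r' iS' False S(2) S'(2) by (simp add: r_def)
        qed
      qed
      thus "\<exists>r::nat\<Rightarrow>nat. \<forall>i\<in>S. r i < card S \<and> P {j\<in>S. r i \<le> r j} i" by blast
    qed
  qed
  thus ?thesis by blast
qed

lemma sum_split_bound:
  fixes f :: "nat \<Rightarrow> real"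
  assumes "finite N" "\<And>j. j \<in> N \<Longrightarrow> j \<in> R \<Longrightarrow> f j \<le> a" "\<And>j. j \<in> N \<Longrightarrow> j \<notin> R \<Longrightarrow> f j \<le> b"
  shows "sum f N \<le> real (card (N \<inter> R)) * a + (real (card N) - real (card (N \<inter> R))) * b"
proof -
  have "sum f N = sum f (N \<inter> R) + sum f (N - R)" using assms(1) by (rule sum.Int_Diff)
  also have "sum f (N \<inter> R) \<le> real (card (N \<inter> R)) * a"
    by (rule sum_bounded_above) (use assms in auto)
  also have "sum f (N - R) \<le> real (card (N - R)) * b"
    by (rule sum_bounded_above) (use assms in auto)
  also have "real (card (N - R)) = real (card N) - real (card (N \<inter> R))"
    using card_Int_Diff[OF assms(1), of R] by simp
  finally show ?thesis by simp
qed

lemma lin_at_top2: "c > 0 \<Longrightarrow> filterlim (\<lambda>t::real. c * (1 + t)) at_top at_top"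
  unfolding filterlim_at_top eventually_at_top_linorder
proof (intro allI exI[of _ "Z / c" for Z] allI impI)
  fix Z t :: real assume c: "c > 0" and t: "Z / c \<le> t"
  hence "Z \<le> c * t" using c by (simp add: divide_le_eq mult.commute)
  thus "Z \<le> c * (1 + t)" using c by (simp add: distrib_left)
qed

lemma exp_lin_02: assumes c: "c > 0" shows "((\<lambda>t::real. exp (- (c * (1 + t)))) \<longlongrightarrow> 0) at_top"
proof -
  have "filterlim (\<lambda>t::real. - (c * (1 + t))) at_bot at_top"
    using lin_at_top2[OF c] by (simp add: filterlim_uminus_at_bot)
  thus ?thesis by (rule filterlim_compose[OF exp_at_bot])
qed

lemma part2:
  assumes n2: "n \<ge> 2" and conn: "connected_graph n G"
    and zw: "z > w" "w > x" "x > y" "w + x > z + y"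
    and q0nz: "\<forall>i<n. q0 i \<noteq> 0"
    and coh: "\<not> (\<exists>S. S \<noteq> {} \<and> S \<subseteq> {i. i < n \<and> q0 i > 0} \<and>
                 cohesiveness n G S \<ge> 2 * (z - x) / (z - x + w - y))"
  shows "\<exists>psi eta lam. behavioural_params n psi eta lam \<and> actions_converge n G x y z w psi eta lam q0 0"
proof -
  define K where "K = z - x + w - y"
  define a0 where "a0 = (w + x - z - y)/2"
  define M where "M = real n * K"
  define D0 where "D0 = {i. i < n \<and> q0 i > 0}"
  define C0 where "C0 = {i. i < n \<and> q0 i < 0}"
  define \<theta>2 where "\<theta>2 = 2 * (z - x) / K"
  have K: "K > 0" using zw by (simp add: K_def)
  have a0: "a0 > 0" using zw by (simp add: a0_def)
  have M: "M > 0" using K n2 by (simp add: M_def)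
  have Ka0: "x - z + K * (1/2) = a0" by (simp add: K_def a0_def field_simps)
  have wyK: "w - y \<le> K" using zw by (simp add: K_def)
  have finD: "finite D0" and D0n: "D0 \<subseteq> {..<n}" by (auto simp: D0_def)
  have finC: "finite C0" and C0n: "C0 \<subseteq> {..<n}" by (auto simp: C0_def)
  have DC: "\<And>i. i < n \<Longrightarrow> i \<in> D0 \<or> i \<in> C0" using q0nz by (force simp: D0_def C0_def)
  have DCdisj: "\<And>i. i \<in> D0 \<Longrightarrow> i \<notin> C0" by (auto simp: D0_def C0_def)
  obtain r where r: "\<forall>i\<in>D0. r i < card D0 \<and>
      real (card (nbrs n G i \<inter> {j\<in>D0. r i \<le> r j})) / real (deg n G i) < \<theta>2"
  proof -
    have "\<exists>r::nat\<Rightarrow>nat. \<forall>i\<in>D0. r i < card D0 \<and>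
      real (card (nbrs n G i \<inter> {j\<in>D0. r i \<le> r j})) / real (deg n G i) < \<theta>2"
    proof (rule rank_exists[OF finD])
      fix S assume S: "S \<subseteq> D0" "S \<noteq> {}"
      have "\<not> (cohesiveness n G S \<ge> \<theta>2)" using coh S unfolding D0_def \<theta>2_def K_def by blast
      hence "Min ((\<lambda>i. real (card (nbrs n G i \<inter> S)) / real (deg n G i)) ` S) < \<theta>2"
        unfolding cohesiveness_def by simp
      moreover have "finite S" using S(1) finD finite_subset by auto
      ultimately show "\<exists>i\<in>S. real (card (nbrs n G i \<inter> S)) / real (deg n G i) < \<theta>2"
        using S(2) by (simp add: Min_less_iff)
    qed
    thus ?thesis using that by blast
  qed
  define R where "R i = {j\<in>D0. r i \<le> r j}" for i
  define m where "m i = real (card (nbrs n G i \<inter> R i))" for i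
  define d where "d i = real (deg n G i)" for i
  define \<nu> where "\<nu> i = d i * (z - x) - m i * K / 2" for i
  have d1: "\<And>i. i < n \<Longrightarrow> 1 \<le> d i" using deg_pos[OF conn n2] by (simp add: d_def)
  have \<nu>: "\<nu> i > 0" if i: "i \<in> D0" for i
  proof -
    have "m i / d i < 2 * (z - x) / K" using r i by (simp add: m_def d_def R_def \<theta>2_def)
    moreover have "d i > 0" using d1[of i] i D0n by force
    ultimately have "m i * K < 2 * (z - x) * d i" using K by (simp add: field_simps)
    thus ?thesis by (simp add: \<nu>_def field_simps)
  qed
  define \<mu>0 where "\<mu>0 = Min (insert (z - x) ((\<lambda>i. \<nu> i / d i) ` D0))"
  have \<mu>0: "\<mu>0 > 0" "\<mu>0 \<le> z - x" "\<And>i. i \<in> D0 \<Longrightarrow> \<mu>0 \<le> \<nu> i / d i"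
  proof -
    have fin: "finite (insert (z - x) ((\<lambda>i. \<nu> i / d i) ` D0))" using finD by simp
    have pos: "\<forall>a\<in>insert (z - x) ((\<lambda>i. \<nu> i / d i) ` D0). 0 < a"
    proof
      fix a assume "a \<in> insert (z - x) ((\<lambda>i. \<nu> i / d i) ` D0)"
      then consider "a = z - x" | i where "i \<in> D0" "a = \<nu> i / d i" by blast
      thus "0 < a"
      proof cases
        case 1 thus ?thesis using zw by simp
      next
        case 2 thus ?thesis using \<nu>[of i] d1[of i] D0n by force
      qed
    qed
    show "\<mu>0 > 0" unfolding \<mu>0_def using fin pos by simp
    show "\<mu>0 \<le> z - x" unfolding \<mu>0_def using fin by simp
    fix i assume "i \<in> D0" thus "\<mu>0 \<le> \<nu> i / d i" unfolding \<mu>0_def using fin by (intro Min_le) auto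
  qed
  define \<mu> where "\<mu> = \<mu>0 / 2"
  define \<delta> where "\<delta> = \<mu>0 / (2 * K)"
  have \<mu>: "\<mu> > 0" using \<mu>0 by (simp add: \<mu>_def)
  have \<delta>: "\<delta> > 0" "\<delta> < 1" using \<mu>0 K zw by (auto simp: \<delta>_def K_def field_simps)
  have Kd: "K * \<delta> = \<mu>0 / 2" using K by (simp add: \<delta>_def)
  have key: "m i * (a0 + K * \<delta>) + (d i - m i) * (x - z + K * \<delta>) \<le> - \<mu>" if i: "i \<in> D0" for i
  proof -
    have di: "1 \<le> d i" using d1[of i] i D0n by force
    have "d i * \<mu>0 \<le> \<nu> i" using \<mu>0(3)[OF i] di by (simp add: field_simps)
    moreover have "m i * (a0 + K * \<delta>) + (d i - m i) * (x - z + K * \<delta>) = - \<nu> i + d i * (\<mu>0 / 2)"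
    proof -
      have e1: "a0 + z - x = K/2" by (simp add: a0_def K_def field_simps)
      have "m i * (a0 + K * \<delta>) + (d i - m i) * (x - z + K * \<delta>)
            = m i * (a0 + z - x) - d i * (z - x) + d i * (K * \<delta>)" by (simp add: algebra_simps)
      also have "\<dots> = - \<nu> i + d i * (\<mu>0 / 2)" unfolding e1 Kd \<nu>_def by simp
      finally show ?thesis .
    qed
    moreover have "\<mu>0/2 \<le> d i * \<mu>0 / 2" using di \<mu>0 by simp
    ultimately show ?thesis unfolding \<mu>_def by linarith
  qed
  define W where "W = Min (insert 1 ((\<lambda>i. \<bar>q0 i\<bar> / (4*M)) ` C0))"
  have W: "W > 0" "W \<le> 1" "\<And>i. i \<in> C0 \<Longrightarrow> W \<le> \<bar>q0 i\<bar> / (4*M)"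
  proof -
    have fin: "finite (insert 1 ((\<lambda>i. \<bar>q0 i\<bar> / (4*M)) ` C0))" using finC by simp
    have "0 < \<bar>q0 i\<bar> / (4*M)" if "i \<in> C0" for i
      using M that by (intro divide_pos_pos) (auto simp: C0_def)
    hence "\<forall>a\<in>insert 1 ((\<lambda>i. \<bar>q0 i\<bar> / (4*M)) ` C0). 0 < a" by auto
    thus "W > 0" unfolding W_def using fin by simp
    show "W \<le> 1" unfolding W_def using fin by simp
    fix i assume "i \<in> C0" thus "W \<le> \<bar>q0 i\<bar> / (4*M)" unfolding W_def using fin by (intro Min_le) auto
  qed
  define \<psi>C where "\<psi>C = 1 / (2*W)"
  define \<Delta> where "\<Delta> = W / (real n + 1)"
  define \<rho> where "\<rho> = \<Delta> / 2"
  define Bq where "Bq = (\<Sum>i<n. \<bar>q0 i\<bar>) + 2*M"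
  define \<psi>D where "\<psi>D = max 1 (32*(Bq + \<mu>)/(\<mu>*\<Delta>^2))"
  define cD where "cD = \<mu> / (2*\<psi>D)"
  define LD where "LD = cD / 2"
  define \<gamma> where "\<gamma> i = \<bar>q0 i\<bar> / 4" for i
  define psi where "psi i = (if i \<in> D0 then \<psi>D else \<psi>C)" for i
  define Lv where "Lv i = (if i \<in> D0 then LD else \<gamma> i)" for i
  define c' where "c' i = min (Lv i) ((z - x) / (8 * psi i)) / 2" for i
  define c where "c i = c' i / 2" for i
  define cmin where "cmin = Min (c ` {..<n})"
  define \<sigma> where "\<sigma> k = (real k + 1) * \<Delta>" for k :: nat
  define \<tau> where "\<tau> k = real k * \<Delta> + \<Delta> / 2" for k :: nat
  define st where "st i = (if i \<in> D0 then \<sigma> (r i) else -1)" for i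
  define A where "A = ln (1 / \<delta>) / (\<rho> * cmin)"
  define \<epsilon> where "\<epsilon> = \<delta> / (2 * (Bq + 1))"
  define lam where "lam i t = \<epsilon> * (1 + t) + A * max 0 (t - st i)" for i t
  have \<psi>C: "\<psi>C \<ge> 1/2" using W by (simp add: \<psi>C_def field_simps)
  have \<psi>D: "\<psi>D \<ge> 1" by (simp add: \<psi>D_def)
  have psi: "\<And>i. psi i \<ge> 1/2" "\<And>i. psi i > 0" using \<psi>C \<psi>D by (auto simp: psi_def)
  have \<Delta>: "\<Delta> > 0" "\<Delta> \<le> 1" using W by (auto simp: \<Delta>_def field_simps)
  have \<rho>: "\<rho> > 0" "\<rho> \<le> 1" using \<Delta> by (auto simp: \<rho>_def)
  have Bq: "Bq \<ge> 0" using M by (simp add: Bq_def sum_nonneg)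
  have cD: "cD > 0" "LD > 0" using \<mu> \<psi>D by (auto simp: cD_def LD_def)
  have Lv: "\<And>i. i < n \<Longrightarrow> Lv i > 0"
    using cD DC q0nz by (auto simp: Lv_def \<gamma>_def C0_def)
  have c': "\<And>i. i < n \<Longrightarrow> c' i > 0" using Lv psi zw by (simp add: c'_def)
  have cc': "\<And>i. i < n \<Longrightarrow> 0 < c i \<and> c i < c' i" using c' by (simp add: c_def)
  have c'L: "\<And>i. c' i \<le> Lv i / 2" by (simp add: c'_def)
  have c'psi: "\<And>i. psi i * c' i \<le> (z - x) / 16"
  proof -
    fix i
    have "min (Lv i) ((z - x) / (8 * psi i)) \<le> (z - x) / (8 * psi i)" by (rule min.cobounded2)
    hence "c' i \<le> (z - x) / (8 * psi i) / 2" unfolding c'_def by (rule divide_right_mono) simp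
    hence "psi i * c' i \<le> psi i * ((z - x) / (8 * psi i) / 2)" using psi(2)[of i] by (intro mult_left_mono) auto
    thus "psi i * c' i \<le> (z - x) / 16" using psi(2)[of i] by simp
  qed
  have cmin: "cmin > 0" "\<And>i. i < n \<Longrightarrow> cmin \<le> c i"
  proof -
    have "0 \<in> {..<n}" using n2 by simp
    hence fin: "finite (c ` {..<n})" "c ` {..<n} \<noteq> {}" by auto
    show "cmin > 0" unfolding cmin_def using fin cc' by simp
    fix i assume "i < n" thus "cmin \<le> c i" unfolding cmin_def using fin by (intro Min_le) auto
  qed
  have A: "A > 0" using \<delta> \<rho> cmin by (simp add: A_def)
  have \<epsilon>: "\<epsilon> > 0" using \<delta> Bq by (simp add: \<epsilon>_def)
  have expA: "exp (- (A * \<rho> * cmin)) = \<delta>" using \<rho> cmin \<delta> by (simp add: A_def exp_minus ln_div)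
  have pD_small: "pD l v \<le> \<delta>" if "A * \<rho> \<le> l" "v \<le> - cc" "cmin \<le> cc" for l v cc
  proof -
    have l0: "0 \<le> l" using that A \<rho> by (smt (verit) mult_pos_pos)
    have "v \<le> - cmin" using that by simp
    hence "l * v \<le> l * (- cmin)" using l0 by (intro mult_left_mono)
    also have "\<dots> \<le> (A * \<rho>) * (- cmin)" using that cmin by (intro mult_right_mono_neg) auto
    finally have "exp (l * v) \<le> exp (- (A * \<rho> * cmin))" by simp
    thus ?thesis using pD_le_exp[of l v] expA by simp
  qed
  have lam_ge: "\<epsilon> * (1 + t) \<le> lam i t" for i t using A by (simp add: lam_def)
  have lam_ge2: "A * (t - st i) \<le> lam i t" if "0 \<le> t" for i t
  proof -
    have "A * (t - st i) \<le> A * max 0 (t - st i)" using A by (intro mult_left_mono) auto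
    thus ?thesis using \<epsilon> that by (simp add: lam_def) (smt (verit) mult_pos_pos)
  qed
  have bp: "behavioural_params n psi (\<lambda>_. 1) lam"
    unfolding behavioural_params_def
  proof (intro allI impI conjI)
    fix i assume "i < n"
    show "0 < psi i" by (rule psi(2))
    show "0 \<le> (1::real)" "(1::real) \<le> 1" by simp_all
    show "strict_mono_on {0..} (lam i)" unfolding strict_mono_on_def
    proof (intro allI impI)
      fix a b :: real assume "a \<in> {0..} \<and> b \<in> {0..} \<and> a < b"
      hence "a < b" by simp
      hence "\<epsilon> * (1 + a) < \<epsilon> * (1 + b)" "A * max 0 (a - st i) \<le> A * max 0 (b - st i)"
        using \<epsilon> A by (auto intro: mult_left_mono)
      thus "lam i a < lam i b" by (simp add: lam_def)
    qed
    show "filterlim (lam i) at_top at_top"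
      by (rule filterlim_at_top_mono[OF lin_at_top2[OF \<epsilon>]]) (simp add: lam_ge)
    fix t :: real assume "0 \<le> t"
    thus "0 < lam i t" using lam_ge[of t i] \<epsilon> by (smt (verit) mult_pos_pos)
  qed
  have ex: "\<exists>q. is_solution n G x y z w psi (\<lambda>_. 1) lam q0 q"
  proof (rule exists_sol)
    fix j assume "j < n"
    show "continuous_on {0..} (lam j)" unfolding lam_def by (intro continuous_intros)
    fix t :: real assume "0 \<le> t"
    thus "0 \<le> lam j t" using lam_ge[of t j] \<epsilon> by (smt (verit) mult_pos_pos)
  next
    fix j and a b :: real assume "0 \<le> a" "a \<le> b"
    hence "\<epsilon> * (1 + a) \<le> \<epsilon> * (1 + b)" "A * max 0 (a - st j) \<le> A * max 0 (b - st j)"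
      using \<epsilon> A by (auto intro: mult_left_mono)
    thus "lam j a \<le> lam j b" by (simp add: lam_def)
  next
    show "0 \<le> z - x + w - y" using K by (simp add: K_def)
  qed
  have cminL: "cmin \<le> Lv i" if "i < n" for i
    using cmin(2)[OF that] cc'[OF that] c'L[of i] Lv[OF that] by linarith
  have WD: "W = (real n + 1) * \<Delta>" by (simp add: \<Delta>_def)
  have \<sigma>W: "\<sigma> (r i) + \<Delta> \<le> W" if "i \<in> D0" for i
  proof -
    have "r i < card D0" using r that by blast
    also have "card D0 \<le> n" using card_mono[OF _ D0n] by simp
    finally have "real (r i) + 1 \<le> real n" by linarith
    hence "(real (r i) + 1) * \<Delta> \<le> real n * \<Delta>" using \<Delta> by (intro mult_right_mono) auto
    thus ?thesis unfolding \<sigma>_def WD by (simp add: algebra_simps)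
  qed
  have \<sigma>0: "\<sigma> k \<ge> 0" "\<tau> k \<ge> 0" "\<tau> k \<le> \<sigma> k" "\<sigma> k - \<tau> k = \<Delta>/2" for k
    using \<Delta> by (auto simp: \<sigma>_def \<tau>_def algebra_simps)
  have conv: "\<forall>i<n. ((\<lambda>t. pD (lam i t) (q t i)) \<longlongrightarrow> 0) at_top"
    if sol: "is_solution n G x y z w psi (\<lambda>_. 1) lam q0 q" for q
  proof -
    define S where "S t i = (\<Sum>j\<in>nbrs n G i. (x - z) + K * pD (lam j t) (q t j))" for t i
    define f where "f t i = - psi i * q t i + S t i" for t i
    have der: "((\<lambda>s. q s i) has_real_derivative f t i) (at t)" if "i < n" "0 < t" for i t
      using sol_facts(3)[OF sol that(1) that(2)] by (simp add: f_def S_def field_eta1 K_def)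
    have cont: "continuous_on {0..} (\<lambda>t. q t i)" if "i < n" for i
      using sol_facts(2)[OF sol that] .
    have q00: "q 0 i = q0 i" if "i < n" for i using sol_facts(1)[OF sol that] .
    have qb: "\<bar>q t i\<bar> \<le> Bq" if i: "i < n" and t: "0 \<le> t" for i t
    proof -
      have "\<bar>q t i\<bar> \<le> \<bar>q0 i\<bar> + real n * (z - x + w - y) / psi i"
      proof (rule sol_bound[OF sol i psi(2) _ _ t])
        fix j and t' :: real assume "0 \<le> t'"
        thus "0 \<le> lam j t'" using lam_ge[of t' j] \<epsilon> by (smt (verit) mult_pos_pos)
      qed (use zw in auto)
      moreover have "\<bar>q0 i\<bar> \<le> (\<Sum>i<n. \<bar>q0 i\<bar>)" using i by (intro member_le_sum) auto
      moreover have "M / psi i \<le> 2 * M"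
        using psi[of i] M by (simp add: divide_le_eq)
      ultimately show ?thesis by (simp add: Bq_def M_def K_def)
    qed
    have termb: "(x - z) + K * pD (lam j t) (q t j) \<le> x - z + K * p" if "pD (lam j t) (q t j) \<le> p" for j t p
      using that K by (simp add: mult_left_mono)
    have Sup: "S t i \<le> M" if "i < n" for t i
    proof -
      have "S t i \<le> real (card (nbrs n G i)) * K"
        unfolding S_def
      proof (rule sum_bounded_above)
        fix j
        have "(x - z) + K * pD (lam j t) (q t j) \<le> x - z + K * 1" by (rule termb) (simp add: pD_bounds)
        thus "(x - z) + K * pD (lam j t) (q t j) \<le> K" using zw by (simp add: K_def)
      qed
      also have "\<dots> \<le> M" unfolding M_def using deg_le[of n G i] K
        by (intro mult_right_mono) (auto simp: deg_def)
      finally show ?thesis .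
    qed
    have W1: "q t i \<le> - \<gamma> i" if i: "i \<in> C0" and t: "0 \<le> t" "t \<le> W" for i t
    proof -
      have iN: "i < n" and iD: "i \<notin> D0" using i DCdisj by (auto simp: C0_def)
      have psiC: "psi i = \<psi>C" using iD by (simp add: psi_def)
      have up: "q t i \<le> M/\<psi>C + (q 0 i - M/\<psi>C) * exp (- \<psi>C * (t - 0))"
      proof (rule cmp_up[where u' = "\<lambda>s. f s i"])
        show "0 \<le> t" "0 < \<psi>C" using t \<psi>C by auto
        show "continuous_on {0..t} (\<lambda>s. q s i)" using cont[OF iN] by (rule continuous_on_subset) auto
        fix s assume s: "0 < s" "s < t"
        show "((\<lambda>s. q s i) has_real_derivative f s i) (at s)" using der[OF iN] s by simp
        show "f s i \<le> - \<psi>C * q s i + M" using Sup[OF iN, of s] psiC by (simp add: f_def)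
      qed
      have MW: "M / \<psi>C = 2 * M * W" by (simp add: \<psi>C_def)
      have e: "1/2 \<le> exp (- \<psi>C * (t - 0))"
      proof -
        have "\<psi>C * t \<le> 1/2" using t W by (simp add: \<psi>C_def field_simps)
        thus ?thesis using exp_ge_add_one_self[of "- \<psi>C * t"] by simp
      qed
      have neg: "q 0 i - 2 * M * W \<le> 0" using i M W by (simp add: q00[OF iN] C0_def) (smt (verit) mult_pos_pos)
      have "(q 0 i - 2 * M * W) * exp (- \<psi>C * (t - 0)) \<le> (q 0 i - 2 * M * W) * (1/2)"
        by (rule mult_left_mono_neg[OF e neg])
      hence "q t i \<le> 2 * M * W + (q0 i - 2 * M * W) * (1/2)"
        using up unfolding MW q00[OF iN] by linarith
      moreover have "2 * M * W \<le> \<bar>q0 i\<bar> / 2" using W(3)[OF i] M by (simp add: field_simps)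
      moreover have "q0 i = - \<bar>q0 i\<bar>" using i by (simp add: C0_def)
      ultimately show ?thesis unfolding \<gamma>_def by argo
    qed
    have pC: "pD (lam j t) (q t j) \<le> \<delta>" if j: "j \<in> C0" and t: "0 \<le> t" "t \<le> W" for j t
    proof (rule pD_small)
      have jN: "j < n" and jD: "j \<notin> D0" using j DCdisj by (auto simp: C0_def)
      have "A * \<rho> \<le> A * (t - st j)" using A \<rho> t jD by (intro mult_left_mono) (auto simp: st_def)
      thus "A * \<rho> \<le> lam j t" using lam_ge2[OF t(1), of j] by linarith
      show "q t j \<le> - \<gamma> j" by (rule W1[OF j t])
      show "cmin \<le> \<gamma> j" using cminL[OF jN] jD by (simp add: Lv_def)
    qed
    have W2: "\<forall>i\<in>D0. \<forall>t. \<sigma> (r i) \<le> t \<longrightarrow> t \<le> W \<longrightarrow> q t i < - LD"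
    proof (intro ballI allI impI)
      fix i0 t0 assume i00: "i0 \<in> D0" "\<sigma> (r i0) \<le> t0" "t0 \<le> W"
      show "q t0 i0 < - LD"
      proof (rule ccontr)
      assume "\<not> q t0 i0 < - LD"
      hence i0: "i0 \<in> D0" "\<sigma> (r i0) \<le> t0" "t0 \<le> W" "- LD \<le> q t0 i0" using i00 by auto
      define Bad where "Bad = (\<Union>j\<in>D0. {t \<in> {\<sigma> (r j)..W}. - LD \<le> q t j})"
      have cj: "continuous_on {\<sigma> (r j)..W} (\<lambda>t. q t j)" if "j \<in> D0" for j
      proof -
        have jn: "j < n" using that D0n by auto
        show ?thesis by (rule continuous_on_subset[OF cont[OF jn]]) (use \<sigma>0[of "r j"] in auto)
      qed
      have "closed Bad" unfolding Bad_def
        by (intro closed_UN finD ballI continuous_on_closed_Collect_le cj continuous_on_const) auto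
      moreover have "t0 \<in> Bad" using i0 unfolding Bad_def by force
      moreover have "bdd_below Bad"
      proof (rule bdd_belowI[of _ 0])
        fix t assume "t \<in> Bad"
        then obtain j where "j \<in> D0" "\<sigma> (r j) \<le> t" unfolding Bad_def by auto
        thus "0 \<le> t" using \<sigma>0(1)[of "r j"] by linarith
      qed
      ultimately have "Inf Bad \<in> Bad" using closed_contains_Inf by blast
      define ts where "ts = Inf Bad"
      obtain k where k: "k \<in> D0" "\<sigma> (r k) \<le> ts" "ts \<le> W" "- LD \<le> q ts k"
        using \<open>Inf Bad \<in> Bad\<close> unfolding ts_def Bad_def by auto
      have kN: "k < n" using k D0n by auto
      have before: "q s j < - LD" if "j \<in> D0" "\<sigma> (r j) \<le> s" "s < ts" for s j
      proof (rule ccontr)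
        assume "\<not> q s j < - LD"
        hence "s \<in> Bad" unfolding Bad_def using that k by force
        hence "ts \<le> s" unfolding ts_def using \<open>bdd_below Bad\<close> by (rule cInf_lower)
        thus False using that by simp
      qed
      have drift: "f s k \<le> - \<psi>D * q s k + (- \<mu>)" if s: "\<tau> (r k) < s" "s < ts" for s
      proof -
        have s0: "0 \<le> s" "s \<le> W" using s \<sigma>0[of "r k"] k by auto
        have "S s k \<le> m k * (a0 + K * \<delta>) + (d k - m k) * (x - z + K * \<delta>)"
        proof -
          have "S s k \<le> real (card (nbrs n G k \<inter> R k)) * (a0 + K * \<delta>)
               + (real (card (nbrs n G k)) - real (card (nbrs n G k \<inter> R k))) * (x - z + K * \<delta>)"
            unfolding S_def
          proof (rule sum_split_bound[OF nbrs_fin])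
            fix j assume jN: "j \<in> nbrs n G k" and jR: "j \<in> R k"
            have jD: "j \<in> D0" and rkj: "r k \<le> r j" using jR by (auto simp: R_def)
            have jn: "j < n" using jD D0n by auto
            have "pD (lam j s) (q s j) \<le> 1/2 + \<delta>"
            proof (cases "s \<le> \<sigma> (r j)")
              case True
              hence "lam j s = \<epsilon> * (1 + s)" using jD by (simp add: lam_def st_def)
              hence "\<bar>pD (lam j s) (q s j) - 1/2\<bar> \<le> \<epsilon> * (1 + s) * \<bar>q s j\<bar>"
                using pD_half[of "lam j s" "q s j"] \<epsilon> s0 by (simp add: abs_mult)
              also have "\<dots> \<le> \<epsilon> * 2 * (Bq + 1)"
                using qb[OF jn s0(1)] \<epsilon> s0 W by (intro mult_mono) auto
              also have "\<dots> = \<delta>"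
              proof -
                have "Bq + 1 > 0" using Bq by simp
                thus ?thesis by (simp add: \<epsilon>_def field_simps)
              qed
              finally show ?thesis by linarith
            next
              case False
              hence "q s j < - LD" using before[OF jD] s by simp
              hence "pD (lam j s) (q s j) \<le> 1/2"
                using cD lam_ge[of s j] \<epsilon> s0
                by (intro pD_le_half) (auto intro: order.trans[rotated] simp: mult_nonneg_nonneg)
              thus ?thesis using \<delta> by linarith
            qed
            hence "(x - z) + K * pD (lam j s) (q s j) \<le> x - z + K * (1/2 + \<delta>)" by (rule termb)
            thus "(x - z) + K * pD (lam j s) (q s j) \<le> a0 + K * \<delta>" using Ka0 by (simp add: algebra_simps)
          next
            fix j assume jN: "j \<in> nbrs n G k" and jR: "j \<notin> R k"
            have jn: "j < n" using jN nbrs_sub by blast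
            have "pD (lam j s) (q s j) \<le> \<delta>"
            proof (cases "j \<in> D0")
              case False
              hence "j \<in> C0" using DC[OF jn] by simp
              thus ?thesis using pC s0 by blast
            next
              case True
              hence rjk: "r j < r k" using jR by (auto simp: R_def)
              hence "real (r j) + 1 \<le> real (r k)" by linarith
              hence "(real (r j) + 1) * \<Delta> \<le> real (r k) * \<Delta>" using \<Delta> by (intro mult_right_mono) auto
              hence sj: "\<sigma> (r j) + \<rho> \<le> \<tau> (r k)" by (simp add: \<sigma>_def \<tau>_def \<rho>_def)
              show ?thesis
              proof (rule pD_small)
                have "A * \<rho> \<le> A * (s - st j)" using A True sj s by (intro mult_left_mono) (auto simp: st_def)
                thus "A * \<rho> \<le> lam j s" using lam_ge2[OF s0(1), of j] by linarith
                show "q s j \<le> - LD" using before[OF True, of s] sj s \<rho> by auto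
                show "cmin \<le> LD" using cminL[OF jn] True by (simp add: Lv_def)
              qed
            qed
            hence "(x - z) + K * pD (lam j s) (q s j) \<le> x - z + K * \<delta>" by (rule termb)
            thus "(x - z) + K * pD (lam j s) (q s j) \<le> x - z + K * \<delta>" .
          qed
          thus ?thesis by (simp add: m_def d_def deg_def)
        qed
        also have "\<dots> \<le> - \<mu>" by (rule key[OF k(1)])
        finally show ?thesis using k(1) by (simp add: f_def psi_def)
      qed
      have up: "q ts k \<le> (- \<mu>)/\<psi>D + (q (\<tau> (r k)) k - (- \<mu>)/\<psi>D) * exp (- \<psi>D * (ts - \<tau> (r k)))"
      proof (rule cmp_up[where u' = "\<lambda>s. f s k"])
        show "\<tau> (r k) \<le> ts" using k \<sigma>0[of "r k"] by linarith
        show "0 < \<psi>D" using \<psi>D by simp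
        show "continuous_on {\<tau> (r k)..ts} (\<lambda>s. q s k)"
          by (rule continuous_on_subset[OF cont[OF kN]]) (use \<sigma>0[of "r k"] in auto)
        fix s assume s: "\<tau> (r k) < s" "s < ts"
        show "((\<lambda>s. q s k) has_real_derivative f s k) (at s)"
          using der[OF kN] s \<sigma>0[of "r k"] by simp
        show "f s k \<le> - \<psi>D * q s k + - \<mu>" by (rule drift[OF s])
      qed
      have gap: "\<Delta>/2 \<le> ts - \<tau> (r k)" using k \<sigma>0[of "r k"] by linarith
      have small: "(q (\<tau> (r k)) k + \<mu>/\<psi>D) * exp (- \<psi>D * (ts - \<tau> (r k))) \<le> \<mu> / (2 * \<psi>D)"
      proof (cases "q (\<tau> (r k)) k + \<mu>/\<psi>D \<le> 0")
        case True
        hence "(q (\<tau> (r k)) k + \<mu>/\<psi>D) * exp (- \<psi>D * (ts - \<tau> (r k))) \<le> 0"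
          by (simp add: mult_nonpos_nonneg)
        thus ?thesis using \<mu> \<psi>D by (smt (verit) divide_pos_pos)
      next
        case False
        have qt: "q (\<tau> (r k)) k \<le> Bq" using qb[OF kN \<sigma>0(2)[of "r k"]] by (simp add: abs_le_iff)
        have e1: "exp (- \<psi>D * (ts - \<tau> (r k))) \<le> exp (- (\<psi>D * \<Delta> / 2))"
          using gap \<psi>D by (simp add: mult_left_mono)
        have e2: "exp (- (\<psi>D * \<Delta> / 2)) \<le> 4 / (\<psi>D * \<Delta> / 2)^2"
          by (rule exp_neg_sq) (use \<psi>D \<Delta> in simp)
        have "(q (\<tau> (r k)) k + \<mu>/\<psi>D) * exp (- \<psi>D * (ts - \<tau> (r k)))
              \<le> (Bq + \<mu>) * (4 / (\<psi>D * \<Delta> / 2)^2)"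
        proof (rule mult_mono)
          have "\<mu>/\<psi>D \<le> \<mu>" using \<mu> \<psi>D by (simp add: divide_le_eq mult_le_cancel_left1)
          thus "q (\<tau> (r k)) k + \<mu>/\<psi>D \<le> Bq + \<mu>" using qt by linarith
          show "exp (- \<psi>D * (ts - \<tau> (r k))) \<le> 4 / (\<psi>D * \<Delta> / 2)^2" using e1 e2 by linarith
        qed (use False Bq \<mu> in auto)
        also have "(Bq + \<mu>) * (4 / (\<psi>D * \<Delta> / 2)^2) = 16 * (Bq + \<mu>) / (\<psi>D^2 * \<Delta>^2)"
          by (simp add: power_mult_distrib power_divide field_simps)
        also have "\<dots> \<le> \<mu> / (2 * \<psi>D)"
        proof -
          have "32 * (Bq + \<mu>) / (\<mu> * \<Delta>^2) \<le> \<psi>D" by (simp add: \<psi>D_def)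
          hence h: "32 * (Bq + \<mu>) \<le> \<psi>D * (\<mu> * \<Delta>^2)" using \<mu> \<Delta> by (simp add: divide_le_eq)
          have h2: "32 * (Bq + \<mu>) * \<psi>D \<le> (\<psi>D * (\<mu> * \<Delta>^2)) * \<psi>D"
            by (rule mult_right_mono[OF h]) (use \<psi>D in simp)
          thus ?thesis using \<mu> \<Delta> \<psi>D by (simp add: divide_le_eq le_divide_eq field_simps power2_eq_square)
        qed
        finally show ?thesis .
      qed
      have "q ts k \<le> - (\<mu> / (2 * \<psi>D))"
        using up small by (simp add: field_simps) 
      moreover have "LD < \<mu> / (2 * \<psi>D)" using cD by (simp add: LD_def cD_def)
      ultimately show False using k(4) by linarith
    qed
    qed
    have trapped: "\<forall>t\<ge>W. \<forall>i<n. c i \<le> - q t i"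
    proof (rule trap[where u = "\<lambda>t i. - q t i" and u' = "\<lambda>t i. - f t i" and c' = c'])
      fix i assume i: "i < n"
      have "continuous_on {W..} (\<lambda>t. q t i)"
        by (rule continuous_on_subset[OF cont[OF i]]) (use W in auto)
      thus "continuous_on {W..} (\<lambda>t. - q t i)" by (rule continuous_on_minus)
      show "c i < c' i" using cc'[OF i] by simp
      show "c' i < - q W i"
      proof (cases "i \<in> D0")
        case True
        have "q W i < - LD" using W2 True \<sigma>W[OF True] \<Delta> by auto
        moreover have "c' i \<le> LD / 2" using c'L[of i] True by (simp add: Lv_def)
        ultimately show ?thesis using cD by linarith
      next
        case False
        hence iC: "i \<in> C0" using DC[OF i] by simp
        have "q W i \<le> - \<gamma> i" using W1[OF iC] W by simp
        moreover have "c' i \<le> \<gamma> i / 2" using c'L[of i] False by (simp add: Lv_def)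
        moreover have "\<gamma> i > 0" using Lv[OF i] False by (simp add: Lv_def)
        ultimately show ?thesis by linarith
      qed
      fix t assume "W < t"
      thus "((\<lambda>s. - q s i) has_real_derivative - f t i) (at t)"
        using der[OF i, of t] W by (intro DERIV_minus) simp
    next
      fix t i assume t: "W < t" and all: "\<forall>j<n. c j \<le> - q t j" and i: "i < n" and ui: "- q t i \<le> c' i"
      have t0: "0 \<le> t" using t W by simp
      have pj: "pD (lam j t) (q t j) \<le> \<delta>" if j: "j \<in> nbrs n G i" for j
      proof (rule pD_small)
        have jn: "j < n" using j nbrs_sub by blast
        have "\<rho> \<le> t - st j"
        proof (cases "j \<in> D0")
          case True
          thus ?thesis using \<sigma>W[OF True] t \<Delta> by (simp add: st_def \<rho>_def)
        next
          case False
          thus ?thesis using t0 \<rho> by (simp add: st_def)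
        qed
        hence "A * \<rho> \<le> A * (t - st j)" using A by (intro mult_left_mono) auto
        thus "A * \<rho> \<le> lam j t" using lam_ge2[OF t0, of j] by linarith
        show "q t j \<le> - c j" using all jn by force
        show "cmin \<le> c j" by (rule cmin(2)[OF jn])
      qed
      have Sb: "S t i \<le> real (card (nbrs n G i)) * (x - z + K * \<delta>)"
        unfolding S_def by (rule sum_bounded_above) (rule termb[OF pj])
      have neg: "x - z + K * \<delta> \<le> - ((z - x) / 2)" using Kd \<mu>0(2) by argo
      have "real (card (nbrs n G i)) * (x - z + K * \<delta>) \<le> 1 * (- ((z - x) / 2))"
      proof -
        have "real (card (nbrs n G i)) * (x - z + K * \<delta>) \<le> real (card (nbrs n G i)) * (- ((z - x) / 2))"
          using neg by (intro mult_left_mono) auto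
        also have "\<dots> \<le> 1 * (- ((z - x) / 2))"
          using d1[OF i] zw by (intro mult_right_mono_neg) (auto simp: d_def deg_def)
        finally show ?thesis .
      qed
      hence S2: "S t i \<le> - ((z - x) / 2)" using Sb by simp
      have "psi i * (- c' i) \<le> psi i * q t i" using ui psi(2)[of i] by (intro mult_left_mono) auto
      hence "- ((z - x) / 16) \<le> psi i * q t i" using c'psi[of i] by argo
      thus "0 < - f t i" using S2 zw by (simp add: f_def; argo)
    qed
    show ?thesis
    proof (intro allI impI)
      fix i assume i: "i < n"
      define cc where "cc = \<epsilon> * c i"
      have cc: "cc > 0" using \<epsilon> cc'[OF i] by (simp add: cc_def)
      show "((\<lambda>t. pD (lam i t) (q t i)) \<longlongrightarrow> 0) at_top"
      proof (rule tendsto_sandwich[where f = "\<lambda>_. 0" and h = "\<lambda>t. exp (- (cc * (1 + t)))"])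
        show "\<forall>\<^sub>F t in at_top. 0 \<le> pD (lam i t) (q t i)" by (simp add: pD_bounds)
        show "\<forall>\<^sub>F t in at_top. pD (lam i t) (q t i) \<le> exp (- (cc * (1 + t)))"
          unfolding eventually_at_top_linorder
        proof (intro exI[of _ W] allI impI)
          fix t assume t: "W \<le> t"
          have qi: "q t i \<le> - c i" using trapped t i by force
          have l0: "0 \<le> lam i t" using lam_ge[of t i] \<epsilon> t W by (smt (verit) mult_pos_pos)
          have "lam i t * q t i \<le> lam i t * (- c i)" using qi l0 by (intro mult_left_mono)
          also have "\<dots> \<le> (\<epsilon> * (1 + t)) * (- c i)"
            using lam_ge[of t i] cc'[OF i] by (intro mult_right_mono_neg) auto
          also have "\<dots> = - (cc * (1 + t))" by (simp add: cc_def algebra_simps)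
          finally have "exp (lam i t * q t i) \<le> exp (- (cc * (1 + t)))" by simp
          thus "pD (lam i t) (q t i) \<le> exp (- (cc * (1 + t)))"
            using pD_le_exp[of "lam i t" "q t i"] by linarith
        qed
        show "((\<lambda>t. exp (- (cc * (1 + t)))) \<longlongrightarrow> 0) at_top" by (rule exp_lin_02[OF cc])
      qed simp
    qed
  qed
  show ?thesis
    by (intro exI[of _ psi] exI[of _ "\<lambda>_. 1"] exI[of _ lam] conjI bp)
       (use ex conv in \<open>auto simp: actions_converge_def\<close>)
qed


theorem mainTheorem7:
  fixes n :: nat and G :: "nat \<Rightarrow> nat \<Rightarrow> bool" and x y z w :: real
    and q0 :: "nat \<Rightarrow> real"
  assumes "n \<ge> 2"
    and "simple_graph n G" and "connected_graph n G"
    and "z > w" and "w > x" and "x > y" and "w + x > z + y" and "w > 0" and "z > 0"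
    and "\<forall>i<n. q0 i \<noteq> 0"
  shows "(\<exists>psi eta lam. behavioural_params n psi eta lam \<and>
            actions_converge n G x y z w psi eta lam q0 1)
       \<and> ((\<not> (\<exists>S. S \<noteq> {} \<and> S \<subseteq> {i. i < n \<and> q0 i > 0} \<and>
                 cohesiveness n G S \<ge> 2 * (z - x) / (z - x + w - y)))
          \<longrightarrow> (\<exists>psi eta lam. behavioural_params n psi eta lam \<and>
                 actions_converge n G x y z w psi eta lam q0 0))"
  proof (intro conjI impI)
  show "\<exists>psi eta lam. behavioural_params n psi eta lam \<and> actions_converge n G x y z w psi eta lam q0 1"
    by (rule part1) (use assms in auto)
next
  assume h: "\<not> (\<exists>S. S \<noteq> {} \<and> S \<subseteq> {i. i < n \<and> q0 i > 0} \<and>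
                 cohesiveness n G S \<ge> 2 * (z - x) / (z - x + w - y))"
  show "\<exists>psi eta lam. behavioural_params n psi eta lam \<and> actions_converge n G x y z w psi eta lam q0 0"
    by (rule part2[OF _ _ _ _ _ _ _ h]) (use assms in auto)
qed

end
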